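(* Let $A$ be an $N$-homogeneous algebra with a side-confluent presentation $\langle X\mid R\rangle$, $X$ a finite totally ordered set. (1) For every integer $m$, the restriction of $\phi$ to $V^{\otimes m}$ is a reduction operator relatively to $X^{(m)}$ whose kernel is $I(R)_m$. (2) For every integer $n\geq1$, $\partial'_n$ is the restriction to $\mathrm{im}(\phi)\otimes J_n$ of the linear map $\bigoplus_{m\geq l_N(n)}V^{\otimes m}\to T(V)$ whose restriction to $V^{\otimes m}$ is $\phi|_{V^{\otimes m-l_N(n-1)}}\otimes\mathrm{id}_{V^{\otimes l_N(n-1)}}$.
   Context: $\mathbb{K}$ is a field, $N\geq2$. $X^{(m)}$ is the set of words of length $m$, $V=\mathbb{K}X$, $V^{\otimes m}=\mathbb{K}X^{(m)}$, $T(V)$ the free algebra. $N$-homogeneous presentation: $R\subset V^{\otimes N}$, $A\cong T(V)/I(R)$, $\overline R=\mathrm{span}(R)$, $I(R)_m=0$ ($m<N$), $I(R)_m=\sum_{i=0}^{m-N}V^{\otimes i}\otimes\overline R\otimes V^{\otimes m-N-i}$ ($m\geq N$); $\overline f$ is the image of $f$ in $A$. $X^{(m)}$ lexicographically ordered, $\mathrm{lm}(f)$ greatest word in $f\neq0$. Conventions: leading coefficients in $R$ are $1$; a word is a normal form if it has no factor $\mathrm{lm}(f)$, $f\in R$, an element is a normal form if it is a combination of such words; the presentation is reduced. Operator $S(\mathrm{lm}(f))=\mathrm{lm}(f)-f$ ($f\in R$), $S(w)=w$ otherwise; $\langle t,s\rangle^k=\cdots sts$ ($k$ factors); side-confluent: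 for each $1\leq m\leq N-1$ some $k$ gives $\langle\mathrm{id}_{V^{\otimes m}}\otimes S,S\otimes\mathrm{id}_{V^{\otimes m}}\rangle^k=\langle S\otimes\mathrm{id}_{V^{\otimes m}},\mathrm{id}_{V^{\otimes m}}\otimes S\rangle^k$. Then each $f\in T(V)$ has a unique normal form $\widehat f$ reachable by finitely many reductions (replacing $w_1\mathrm{lm}(g)w_2$, $g\in R$, by $w_1(\mathrm{lm}(g)-g)w_2$), and $f\in I(R)\iff\widehat f=0$. $\phi:T(V)\to T(V)$, $f\mapsto\widehat f$; $\overline\phi:A\to\mathrm{im}(\phi)$, $\overline f\mapsto\widehat f$, is a linear isomorphism. A reduction operator relatively to a finite totally ordered set $Y$ is a linear projector $T$ of $\mathbb{K}Y$ with $T(y)=y$ or $T(y)$ a combination of elements strictly smaller than $y$, for each $y$. Koszul complex: $l_N(2k)=kN$, $l_N(2k+1)=kN+1$; $J_0=\mathbb{K}$, $J_1=V$, $J_2=\overline R$, $J_n=\bigcap_{i=0}^{l_N(n)-N}V^{\otimes i}\otimes\overline R\otimes V^{\otimes l_N(n)-N-i}$ ($n\geq3$); $\partial_n:A\otimes J_n\to A\otimes J_{n-1}$ is the restriction of the left $A$-linear map $1_A\otimes w_1w_2\mapsto\overline{w_1}\otimes w_2$ ($|w_1|=l_N(n)-l_N(n-1)$, $|w_2|=l_N(n-1)$). With $\phi_n=\overline\phi\otimes\mathrm{id}_{J_n}:A\otimes J_n\to\mathrm{im}(\phi)\otimes J_n$ (viewed in $T(V)$ by concatenation), the normalised Koszul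 complex has differentials $\partial'_n=\phi_{n-1}\circ\partial_n\circ\phi_n^{-1}$. *)

theory Defs
  imports Main "HOL-Library.List_Lexorder"
begin

(* Words over the finite totally ordered alphabet 'x are lists; X^{(m)} is words m.
   Words of equal length are compared lexicographically (List_Lexorder).
   An element of T(V) is a finitely supported function 'x list => 'k. *)

type_synonym ('x,'k) tv = "'x list \<Rightarrow> 'k"

definition words :: "nat \<Rightarrow> 'x list set" where
  "words m = {w. length w = m}"

definition supp :: "('x,'k::zero) tv \<Rightarrow> 'x list set" where
  "supp f = {w. f w \<noteq> 0}"

definition TV :: "('x,'k::zero) tv set" where
  "TV = {f. finite (supp f)}"

definition hom :: "nat \<Rightarrow> ('x,'k::zero) tv set" where
  "hom m = {f. finite (supp f) \<and> (\<forall>w. f w \<noteq> 0 \<longrightarrow> length w = m)}"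

definition wd :: "'x list \<Rightarrow> ('x,'k::{zero,one}) tv" where
  "wd w = (\<lambda>u. if u = w then 1 else 0)"

definition cat :: "('x,'k::comm_semiring_1) tv \<Rightarrow> ('x,'k) tv \<Rightarrow> ('x,'k) tv" where
  "cat f g = (\<lambda>w. \<Sum>i\<le>length w. f (take i w) * g (drop i w))"

definition lin_ext :: "('x list \<Rightarrow> ('x,'k::comm_semiring_1) tv) \<Rightarrow> ('x,'k) tv \<Rightarrow> ('x,'k) tv" where
  "lin_ext G f = (\<lambda>u. \<Sum>w\<in>supp f. f w * G w u)"

definition idtens :: "nat \<Rightarrow> (('x,'k::comm_semiring_1) tv \<Rightarrow> ('x,'k) tv) \<Rightarrow> ('x,'k) tv \<Rightarrow> ('x,'k) tv" where
  "idtens a T = lin_ext (\<lambda>w. cat (wd (take a w)) (T (wd (drop a w))))"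

definition tensid :: "(('x,'k::comm_semiring_1) tv \<Rightarrow> ('x,'k) tv) \<Rightarrow> nat \<Rightarrow> ('x,'k) tv \<Rightarrow> ('x,'k) tv" where
  "tensid T b = lin_ext (\<lambda>w. cat (T (wd (take (length w - b) w))) (wd (drop (length w - b) w)))"

inductive_set lspan :: "('x,'k::field) tv set \<Rightarrow> ('x,'k) tv set" for S where
  lspan_zero: "(\<lambda>_. 0) \<in> lspan S"
| lspan_step: "f \<in> lspan S \<Longrightarrow> g \<in> S \<Longrightarrow> (\<lambda>x. c * g x + f x) \<in> lspan S"

(* tensor product of subspaces of T(V), realised in T(V) by concatenation *)
definition tensp :: "('x,'k::field) tv set \<Rightarrow> ('x,'k) tv set \<Rightarrow> ('x,'k) tv set" where
  "tensp P Q = lspan {cat p q | p q. p \<in> P \<and> q \<in> Q}"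

definition lm :: "('x::linorder,'k::zero) tv \<Rightarrow> 'x list" where
  "lm f = Max (supp f)"

definition nf_word :: "('x::linorder,'k::zero) tv set \<Rightarrow> 'x list \<Rightarrow> bool" where
  "nf_word R w \<longleftrightarrow> \<not> (\<exists>u v g. g \<in> R \<and> w = u @ lm g @ v)"

definition nf :: "('x::linorder,'k::zero) tv set \<Rightarrow> ('x,'k) tv \<Rightarrow> bool" where
  "nf R h \<longleftrightarrow> (\<forall>w. h w \<noteq> 0 \<longrightarrow> nf_word R w)"

definition presentation :: "nat \<Rightarrow> ('x::linorder,'k::field) tv set \<Rightarrow> bool" where
  "presentation N R \<longleftrightarrow> R \<subseteq> hom N \<and> (\<lambda>_. 0) \<notin> R
     \<and> (\<forall>f\<in>R. f (lm f) = 1)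
     \<and> (\<forall>f\<in>R. \<forall>g\<in>R. lm f = lm g \<longrightarrow> f = g)
     \<and> (\<forall>f\<in>R. \<forall>w. f w \<noteq> 0 \<and> w \<noteq> lm f \<longrightarrow> nf_word R w)"

definition Sop :: "('x::linorder,'k::field) tv set \<Rightarrow> ('x,'k) tv \<Rightarrow> ('x,'k) tv" where
  "Sop R = lin_ext (\<lambda>w. if w \<in> lm ` R
       then (\<lambda>u. wd w u - (THE g. g \<in> R \<and> lm g = w) u) else wd w)"

(* \<langle>t,s\<rangle>^k = ... s t s  (k factors, rightmost s) *)
fun alt :: "('a \<Rightarrow> 'a) \<Rightarrow> ('a \<Rightarrow> 'a) \<Rightarrow> nat \<Rightarrow> 'a \<Rightarrow> 'a" where
  "alt t s 0 = id"
| "alt t s (Suc k) = (if even k then s else t) \<circ> alt t s k"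

definition side_confluent :: "nat \<Rightarrow> ('x::linorder,'k::field) tv set \<Rightarrow> bool" where
  "side_confluent N R \<longleftrightarrow> (\<forall>m. 1 \<le> m \<and> m \<le> N - 1 \<longrightarrow>
     (\<exists>k\<ge>1. \<forall>f\<in>hom (N + m).
        alt (idtens m (Sop R)) (tensid (Sop R) m) k f
      = alt (tensid (Sop R) m) (idtens m (Sop R)) k f))"

(* one reduction: replace w1 lm(g) w2 by w1 (lm(g) - g) w2 *)
definition red :: "('x::linorder,'k::field) tv set \<Rightarrow> ('x,'k) tv \<Rightarrow> ('x,'k) tv \<Rightarrow> bool" where
  "red R f f' \<longleftrightarrow> (\<exists>u v g. g \<in> R \<and>
      f' = (\<lambda>x. f x - f (u @ lm g @ v) * cat (cat (wd u) g) (wd v) x))"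

definition phi :: "('x::linorder,'k::field) tv set \<Rightarrow> ('x,'k) tv \<Rightarrow> ('x,'k) tv" where
  "phi R f = (THE h. (red R)\<^sup>*\<^sup>* f h \<and> nf R h)"

definition reduction_operator :: "nat \<Rightarrow> (('x::linorder,'k::field) tv \<Rightarrow> ('x,'k) tv) \<Rightarrow> bool" where
  "reduction_operator m T \<longleftrightarrow>
     (\<forall>f\<in>hom m. T f \<in> hom m)
   \<and> (\<forall>f\<in>hom m. \<forall>g\<in>hom m. T (\<lambda>x. f x + g x) = (\<lambda>x. T f x + T g x))
   \<and> (\<forall>f\<in>hom m. \<forall>c. T (\<lambda>x. c * f x) = (\<lambda>x. c * T f x))
   \<and> (\<forall>f\<in>hom m. T (T f) = T f)
   \<and> (\<forall>y\<in>words m. T (wd y) = wd y \<or> (\<forall>x. T (wd y) x \<noteq> 0 \<longrightarrow> x < y))"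

definition Rbar :: "('x,'k::field) tv set \<Rightarrow> ('x,'k) tv set" where
  "Rbar R = lspan R"

definition Icomp :: "nat \<Rightarrow> ('x,'k::field) tv set \<Rightarrow> nat \<Rightarrow> ('x,'k) tv set" where
  "Icomp N R m = (if m < N then {\<lambda>_. 0}
     else lspan (\<Union>i\<in>{0..m-N}. tensp (tensp (hom i) (Rbar R)) (hom (m - N - i))))"

definition hpart :: "nat \<Rightarrow> ('x,'k::zero) tv \<Rightarrow> ('x,'k) tv" where
  "hpart m f = (\<lambda>w. if length w = m then f w else 0)"

definition Ideal :: "nat \<Rightarrow> ('x,'k::field) tv set \<Rightarrow> ('x,'k) tv set" where
  "Ideal N R = {f \<in> TV. \<forall>m. hpart m f \<in> Icomp N R m}"

(* A = T(V)/I(R): elements are cosets *)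
definition cls :: "nat \<Rightarrow> ('x,'k::field) tv set \<Rightarrow> ('x,'k) tv \<Rightarrow> ('x,'k) tv set" where
  "cls N R f = {g \<in> TV. (\<lambda>x. g x - f x) \<in> Ideal N R}"

definition Aset :: "nat \<Rightarrow> ('x,'k::field) tv set \<Rightarrow> ('x,'k) tv set set" where
  "Aset N R = cls N R ` TV"

definition rep :: "('x,'k) tv set \<Rightarrow> ('x,'k) tv" where
  "rep C = (SOME f. f \<in> C)"

definition Azero :: "nat \<Rightarrow> ('x,'k::field) tv set \<Rightarrow> ('x,'k) tv set" where
  "Azero N R = cls N R (\<lambda>_. 0)"

definition phibar :: "('x::linorder,'k::field) tv set \<Rightarrow> ('x,'k) tv set \<Rightarrow> ('x,'k) tv" where
  "phibar R C = phi R (rep C)"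

definition lN :: "nat \<Rightarrow> nat \<Rightarrow> nat" where
  "lN N n = (n div 2) * N + n mod 2"

definition J :: "nat \<Rightarrow> ('x,'k::field) tv set \<Rightarrow> nat \<Rightarrow> ('x,'k) tv set" where
  "J N R n = (if n = 0 then hom 0 else if n = 1 then hom 1 else if n = 2 then Rbar R
     else (\<Inter>i\<in>{0..lN N n - N}. tensp (tensp (hom i) (Rbar R)) (hom (lN N n - N - i))))"

(* A \<otimes> V^{\<otimes>l}, realised as coefficient functions X^{(l)} \<rightarrow> A *)
definition ATV :: "nat \<Rightarrow> ('x,'k::field) tv set \<Rightarrow> nat \<Rightarrow> ('x list \<Rightarrow> ('x,'k) tv set) set" where
  "ATV N R l = {F. (\<forall>v. F v \<in> Aset N R) \<and> (\<forall>v. length v \<noteq> l \<longrightarrow> F v = Azero N R)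
                 \<and> finite {v. F v \<noteq> Azero N R}}"

definition etens :: "nat \<Rightarrow> ('x,'k::field) tv set \<Rightarrow> ('x,'k) tv set \<Rightarrow> ('x,'k) tv \<Rightarrow> 'x list \<Rightarrow> ('x,'k) tv set" where
  "etens N R a j = (\<lambda>v. cls N R (\<lambda>x. j v * rep a x))"

inductive_set atspan :: "nat \<Rightarrow> ('x,'k::field) tv set \<Rightarrow> ('x list \<Rightarrow> ('x,'k) tv set) set
                         \<Rightarrow> ('x list \<Rightarrow> ('x,'k) tv set) set" for N R S where
  atspan_zero: "(\<lambda>_. Azero N R) \<in> atspan N R S"
| atspan_step: "F \<in> atspan N R S \<Longrightarrow> G \<in> S \<Longrightarrow>
     (\<lambda>v. cls N R (\<lambda>x. c * rep (G v) x + rep (F v) x)) \<in> atspan N R S"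

definition AJ :: "nat \<Rightarrow> ('x,'k::field) tv set \<Rightarrow> nat \<Rightarrow> ('x list \<Rightarrow> ('x,'k) tv set) set" where
  "AJ N R n = atspan N R {etens N R a j | a j. a \<in> Aset N R \<and> j \<in> J N R n}"

(* \<partial>_n : 1 \<otimes> w1 w2 \<mapsto> \<overline>w1 \<otimes> w2, extended left A-linearly *)
definition dK :: "nat \<Rightarrow> ('x,'k::field) tv set \<Rightarrow> nat \<Rightarrow> ('x list \<Rightarrow> ('x,'k) tv set) \<Rightarrow> 'x list \<Rightarrow> ('x,'k) tv set" where
  "dK N R n F = (\<lambda>w2. if length w2 = lN N (n - 1)
     then cls N R (\<lambda>x. \<Sum>w1\<in>words (lN N n - lN N (n - 1)). cat (rep (F (w1 @ w2))) (wd w1) x)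
     else Azero N R)"

(* \<phi>_n = \<overline>\<phi> \<otimes> id, landing in im(\<phi>) \<otimes> V^{\<otimes>l} \<subseteq> T(V) by concatenation *)
definition phin :: "('x::linorder,'k::field) tv set \<Rightarrow> nat \<Rightarrow> ('x list \<Rightarrow> ('x,'k) tv set) \<Rightarrow> ('x,'k) tv" where
  "phin R l F = (\<lambda>x. \<Sum>v\<in>words l. cat (phibar R (F v)) (wd v) x)"

definition dprime :: "nat \<Rightarrow> ('x::linorder,'k::field) tv set \<Rightarrow> nat \<Rightarrow> ('x,'k) tv \<Rightarrow> ('x,'k) tv" where
  "dprime N R n f = phin R (lN N (n - 1))
      (dK N R n (inv_into (AJ N R n) (phin R (lN N n)) f))"

end

theory Submission
  imports Defs "HOL-Library.Multiset"
begin


definition lmul :: "'x list \<Rightarrow> ('x,'k::comm_semiring_1) tv \<Rightarrow> ('x,'k) tv" where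
 "lmul a f = (\<lambda>x. if take (length a) x = a then f (drop (length a) x) else 0)"
definition rmul :: "('x,'k::comm_semiring_1) tv \<Rightarrow> 'x list \<Rightarrow> ('x,'k) tv" where
 "rmul f b = (\<lambda>x. if length b \<le> length x \<and> drop (length x - length b) x = b
     then f (take (length x - length b) x) else 0)"
definition lc :: "'a set \<Rightarrow> ('a \<Rightarrow> 'k::comm_semiring_1) \<Rightarrow> ('a \<Rightarrow> ('x,'k) tv) \<Rightarrow> ('x,'k) tv" where
 "lc S c F = (\<lambda>u. \<Sum>x\<in>S. c x * F x u)"

lemma cat_wd_left: "cat (wd a) f = lmul a f"
proof (rule ext)
  fix x :: "'a list"
  have "cat (wd a) f x = (\<Sum>i\<le>length x. (if i = length a then (if take (length a) x = a then f (drop (length a) x) else 0) else 0))"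
    unfolding cat_def wd_def
  proof (intro sum.cong refl)
    fix i assume "i \<in> {..length x}"
    then have "i \<le> length x" by simp
    then show "(if take i x = a then 1 else 0) * f (drop i x) = (if i = length a then (if take (length a) x = a then f (drop (length a) x) else 0) else 0)"
      by (cases "take i x = a") auto
  qed
  also have "\<dots> = lmul a f x"
    by (auto simp: lmul_def)
  finally show "cat (wd a) f x = lmul a f x" .
qed

lemma cat_wd_right: "cat f (wd b) = rmul f b"
proof (rule ext)
  fix x :: "'a list"
  have "cat f (wd b) x = (\<Sum>i\<le>length x. (if i = length x - length b then
        (if length b \<le> length x \<and> drop (length x - length b) x = b then f (take (length x - length b) x) else 0) else 0))"
    unfolding cat_def wd_def
    by (rule sum.cong) auto
  also have "\<dots> = rmul f b x"
    by (auto simp: rmul_def)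
  finally show "cat f (wd b) x = rmul f b x" .
qed


lemma supp_lc: "supp (lc S c F) \<subseteq> (\<Union>x\<in>S. supp (F x))"
  unfolding supp_def lc_def by (auto intro!: sum.neutral)

lemma TV_finite: "f \<in> TV \<Longrightarrow> finite (supp f)" by (simp add: TV_def)

lemma lc_TV: "finite S \<Longrightarrow> (\<And>x. x\<in>S \<Longrightarrow> F x \<in> TV) \<Longrightarrow> lc S c F \<in> TV"
  unfolding TV_def using supp_lc[of S c F] by (auto intro: finite_subset)

lemma supp_wd: "supp (wd w :: ('x,'k::{zero_neq_one}) tv) = {w}"
  by (auto simp: supp_def wd_def)

lemma wd_TV[simp]: "(wd w :: ('x,'k::{zero_neq_one}) tv) \<in> TV"
  by (simp add: TV_def supp_wd)

lemma expand_gen: "finite S \<Longrightarrow> supp f \<subseteq> S \<Longrightarrow> f = lc S f (wd :: _ \<Rightarrow> ('x,'k::comm_semiring_1) tv)"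
proof (rule ext)
  fix u assume S: "finite S" "supp f \<subseteq> S"
  show "f u = lc S f wd u"
  proof (cases "u \<in> S")
    case True
    then have "lc S f wd u = f u" unfolding lc_def wd_def
      using S by (simp add: if_distrib[where f="\<lambda>z. _ * z"] cong: if_cong) 
    then show ?thesis by simp
  next
    case False
    then have "f u = 0" using S by (auto simp: supp_def)
    moreover have "lc S f wd u = 0" unfolding lc_def wd_def using False by (auto intro!: sum.neutral)
    ultimately show ?thesis by simp
  qed
qed

lemma expand: "f \<in> TV \<Longrightarrow> f = lc (supp f) f (wd :: _ \<Rightarrow> ('x,'k::comm_semiring_1) tv)"
  by (rule expand_gen) (auto simp: TV_def)

lemma lin_ext_expand: "finite S \<Longrightarrow> supp f \<subseteq> S \<Longrightarrow> lin_ext G f = lc S f G"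
  unfolding lin_ext_def lc_def
  by (rule ext, rule sum.mono_neutral_left) (auto simp: supp_def)

lemma lin_ext_lc:
  assumes S: "finite S" and F: "\<And>x. x\<in>S \<Longrightarrow> F x \<in> TV"
  shows "lin_ext G (lc S c F) = lc S c (\<lambda>x. lin_ext G (F x))"
proof -
  let ?T = "\<Union>x\<in>S. supp (F x)"
  have T: "finite ?T" using S F by (auto simp: TV_def)
  have "lin_ext G (lc S c F) = lc ?T (lc S c F) G"
    by (rule lin_ext_expand[OF T supp_lc])
  also have "\<dots> = lc S c (\<lambda>x. lc ?T (F x) G)"
    unfolding lc_def by (rule ext) (simp add: sum_distrib_right sum_distrib_left mult.assoc sum.swap[of _ ?T])
  also have "\<dots> = lc S c (\<lambda>x. lin_ext G (F x))"
  proof -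
    have "\<And>x. x \<in> S \<Longrightarrow> lc ?T (F x) G = lin_ext G (F x)"
      by (rule lin_ext_expand[OF T, symmetric]) auto
    then show ?thesis unfolding lc_def by (intro ext sum.cong) (auto simp: fun_eq_iff lc_def)
  qed
  finally show ?thesis .
qed

lemma lin_ext_wd: "lin_ext G (wd w :: ('x,'k::comm_semiring_1) tv) = G w"
  by (subst lin_ext_expand[of "{w}"]) (auto simp: supp_def wd_def lc_def)

lemma lin_ext_add:
  assumes "f \<in> TV" "g \<in> TV"
  shows "lin_ext G (\<lambda>u. a * f u + b * g u) = (\<lambda>u. a * lin_ext G f u + b * lin_ext G g u)"
proof -
  let ?S = "supp f \<union> supp g"
  have S: "finite ?S" using assms by (auto simp: TV_def)
  have s: "supp (\<lambda>u. a * f u + b * g u) \<subseteq> ?S" by (auto simp: supp_def)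
  show ?thesis
    apply (subst lin_ext_expand[OF S s], subst lin_ext_expand[OF S, of f], simp,
           subst lin_ext_expand[OF S, of g], simp)
    by (auto simp: lc_def sum_distrib_left sum.distrib algebra_simps)
qed

lemma lmul_lc: "lmul a (lc S c F) = lc S c (\<lambda>x. lmul a (F x))"
  by (rule ext) (auto simp: lmul_def lc_def)
lemma rmul_lc: "rmul (lc S c F) b = lc S c (\<lambda>x. rmul (F x) b)"
  by (rule ext) (auto simp: rmul_def lc_def)

lemma lmul_wd: "lmul a (wd w) = wd (a @ w)"
  by (rule ext) (auto simp: lmul_def wd_def, metis append_take_drop_id)
lemma rmul_wd: "rmul (wd w) b = wd (w @ b)"
  by (rule ext) (auto simp: rmul_def wd_def, metis append_take_drop_id)


lemma less_append_same_len:
  "length x = length y \<Longrightarrow> (x::'a::linorder list) < y \<Longrightarrow> x @ a < y @ b"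
proof (induction x arbitrary: y)
  case Nil then show ?case by simp
next
  case (Cons c x) then show ?case by (cases y) auto
qed

lemma less_prepend: "((u::'a::linorder list) @ x < u @ y) = (x < y)"
  by (induction u) auto

lemma ctx_less: "length x = length y \<Longrightarrow> (x::'a::linorder list) < y \<Longrightarrow> u @ x @ v < u @ y @ v"
  by (simp add: less_prepend less_append_same_len)

definition rel :: "('x::linorder list \<times> 'x list) set" where
  "rel = {(x,y). length x = length y \<and> x < y}"

lemma finite_words_len: "finite {y::'x::finite list. length y = n}"
  using finite_lists_length_eq[of "UNIV::'x set" n] by simp

lemma wf_rel: "wf (rel :: ('x::{finite,linorder} list \<times> _) set)"
proof -
  define rk where "rk = (\<lambda>x::'x list. card {y. length y = length x \<and> y < x})"
  have "rel \<subseteq> measure rk"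
  proof
    fix p assume "p \<in> (rel :: ('x list \<times> _) set)"
    then obtain x y where p: "p = (x,y)" "length x = length y" "x < y" by (auto simp: rel_def)
    have "{z. length z = length x \<and> z < x} \<subset> {z. length z = length y \<and> z < y}"
      using p by auto
    moreover have "finite {z. length z = length y \<and> z < y}"
      by (rule finite_subset[OF _ finite_words_len[of "length y"]]) auto
    ultimately show "p \<in> measure rk" using p by (auto simp: rk_def intro: psubset_card_mono)
  qed
  then show ?thesis by (rule wf_subset[OF wf_measure])
qed

lemma trans_rel: "(x,y) \<in> rel \<Longrightarrow> (y,z) \<in> rel \<Longrightarrow> (x,z) \<in> rel"
  by (auto simp: rel_def)

abbreviation ctx :: "'x list \<Rightarrow> ('x,'k::comm_semiring_1) tv \<Rightarrow> 'x list \<Rightarrow> ('x,'k) tv" where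
  "ctx u g v \<equiv> rmul (lmul u g) v"

lemma ctx_app[simp]: "ctx u g v (u @ y @ v) = g y"
  by (simp add: lmul_def rmul_def)

lemma ctx_nz: "ctx u g v x \<noteq> 0 \<Longrightarrow> \<exists>y. x = u @ y @ v \<and> g y \<noteq> 0"
proof -
  assume a: "ctx u g v x \<noteq> 0"
  let ?z = "take (length x - length v) x"
  let ?y = "drop (length u) ?z"
  have 1: "length v \<le> length x" "drop (length x - length v) x = v"
    using a by (auto simp: rmul_def split: if_splits)
  have 2: "take (length u) ?z = u" "g ?y \<noteq> 0" using a 1 by (auto simp: lmul_def rmul_def split: if_splits)
  have "x = ?z @ v" using 1 by (metis append_take_drop_id)
  moreover have "?z = u @ ?y" using 2 by (metis append_take_drop_id)
  ultimately have "x = u @ ?y @ v" by (metis append.assoc)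
  then show ?thesis using 2 by blast
qed

lemma ctx_eq_lc: "g \<in> TV \<Longrightarrow> ctx u g v = lc (supp g) g (\<lambda>y. wd (u @ y @ v))"
  apply (subst expand[of g], assumption)
  by (simp add: lmul_lc rmul_lc lmul_wd rmul_wd)

lemma lin_ext_ctx: "g \<in> TV \<Longrightarrow> lin_ext G (ctx u g v) = lc (supp g) g (\<lambda>y. G (u @ y @ v))"
  by (simp add: ctx_eq_lc TV_finite lin_ext_lc lin_ext_wd)

lemma ctx_TV: "g \<in> TV \<Longrightarrow> ctx u g v \<in> TV"
  by (simp add: ctx_eq_lc TV_finite lc_TV)

lemma lin_ext_cong: "(\<And>z. z \<in> supp h \<Longrightarrow> f z = g z) \<Longrightarrow> lin_ext f h = lin_ext g h"
  unfolding lin_ext_def by (rule ext, rule sum.cong) auto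


lemma supp_lin_ext: "supp (lin_ext G h) \<subseteq> (\<Union>x\<in>supp h. supp (G x))"
  unfolding supp_def lin_ext_def by (auto intro!: sum.neutral)

lemma lin_ext_TV: "h \<in> TV \<Longrightarrow> (\<And>x. x \<in> supp h \<Longrightarrow> G x \<in> TV) \<Longrightarrow> lin_ext G h \<in> TV"
  using supp_lin_ext[of G h] unfolding TV_def by (auto intro: finite_subset)

locale pres =
  fixes N :: nat and R :: "('x::{finite,linorder},'k::field) tv set"
  assumes N2: "N \<ge> 2" and P: "presentation N R"
begin

lemma R_hom: "g \<in> R \<Longrightarrow> g \<in> hom N" using P by (auto simp: presentation_def)
lemma R_TV: "g \<in> R \<Longrightarrow> g \<in> TV" using R_hom by (auto simp: hom_def TV_def)
lemma R_len: "g \<in> R \<Longrightarrow> g y \<noteq> 0 \<Longrightarrow> length y = N" using R_hom by (auto simp: hom_def)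
lemma lm_coeff: "g \<in> R \<Longrightarrow> g (lm g) = 1" using P by (auto simp: presentation_def)
lemma lm_inj: "g \<in> R \<Longrightarrow> h \<in> R \<Longrightarrow> lm g = lm h \<Longrightarrow> g = h" using P by (auto simp: presentation_def)
lemma other_nf: "g \<in> R \<Longrightarrow> g y \<noteq> 0 \<Longrightarrow> y \<noteq> lm g \<Longrightarrow> nf_word R y"
  using P by (auto simp: presentation_def)
lemma lm_len: "g \<in> R \<Longrightarrow> length (lm g) = N"
  using R_len lm_coeff by fastforce
lemma lm_max: "g \<in> R \<Longrightarrow> g y \<noteq> 0 \<Longrightarrow> y \<noteq> lm g \<Longrightarrow> (y, lm g) \<in> rel"
proof -
  assume a: "g \<in> R" "g y \<noteq> 0" "y \<noteq> lm g"
  have "y \<le> lm g" unfolding lm_def using a R_TV[of g] by (auto simp: TV_def supp_def)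
  then show ?thesis using a R_len lm_len by (auto simp: rel_def)
qed

lemma ctx_rel: "g \<in> R \<Longrightarrow> g y \<noteq> 0 \<Longrightarrow> y \<noteq> lm g \<Longrightarrow> (u @ y @ v, u @ lm g @ v) \<in> rel"
  using lm_max[of g y] by (auto simp: rel_def intro: ctx_less)

lemma dec_eq: "g \<in> R \<Longrightarrow> (\<lambda>x. wd (u @ lm g @ v) x - ctx u g v x) =
   (\<lambda>x. if x = u @ lm g @ v then 0 else - ctx u g v x)"
  by (rule ext) (auto simp: wd_def lm_coeff)

lemma supp_dec: "g \<in> R \<Longrightarrow> z \<in> supp (\<lambda>x. wd (u @ lm g @ v) x - ctx u g v x) \<Longrightarrow> (z, u @ lm g @ v) \<in> rel"
  apply (simp add: dec_eq supp_def split: if_splits)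
  using ctx_nz ctx_rel by (metis ctx_app)

lemma dec_TV: "g \<in> R \<Longrightarrow> (\<lambda>x. wd w x - ctx u g v x) \<in> TV"
proof -
  assume g: "g \<in> R"
  have "supp (\<lambda>x. wd w x - ctx u g v x) \<subseteq> supp (wd w :: ('x,'k) tv) \<union> supp (ctx u g v)" unfolding supp_def by auto
  then show ?thesis using ctx_TV[OF R_TV[OF g]] wd_TV[of w] unfolding TV_def by (auto intro: finite_subset)
qed

definition cd :: "'x list \<Rightarrow> 'x list \<times> ('x,'k) tv \<times> 'x list" where
  "cd w = (SOME (u,g,v). g \<in> R \<and> w = u @ lm g @ v)"

lemma cd: "\<not> nf_word R w \<Longrightarrow> cd w = (u,g,v) \<Longrightarrow> g \<in> R \<and> w = u @ lm g @ v"
proof -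
  assume a: "\<not> nf_word R w" "cd w = (u,g,v)"
  then have "\<exists>d. (case d of (u,g,v) \<Rightarrow> g \<in> R \<and> w = u @ lm g @ v)" by (auto simp: nf_word_def)
  then have "case cd w of (u,g,v) \<Rightarrow> g \<in> R \<and> w = u @ lm g @ v"
    unfolding cd_def by (rule someI_ex)
  then show ?thesis using a by simp
qed

definition FF :: "('x list \<Rightarrow> ('x,'k) tv) \<Rightarrow> 'x list \<Rightarrow> ('x,'k) tv" where
  "FF G w = (if nf_word R w then wd w else
     (case cd w of (u,g,v) \<Rightarrow> lin_ext G (\<lambda>x. wd w x - ctx u g v x)))"

definition NW :: "'x list \<Rightarrow> ('x,'k) tv" where "NW = wfrec rel FF"

lemma adm: "adm_wf rel FF"
  unfolding adm_wf_def
proof (intro allI impI)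
  fix f g :: "'x list \<Rightarrow> ('x,'k) tv" and w
  assume eq: "\<forall>z. (z, w) \<in> rel \<longrightarrow> f z = g z"
  show "FF f w = FF g w"
  proof (cases "nf_word R w")
    case True then show ?thesis by (simp add: FF_def)
  next
    case False
    obtain u h v where c: "cd w = (u,h,v)" by (cases "cd w") auto
    from cd[OF False c] have h: "h \<in> R" "w = u @ lm h @ v" by auto
    have "lin_ext f (\<lambda>x. wd w x - ctx u h v x) = lin_ext g (\<lambda>x. wd w x - ctx u h v x)"
      by (rule lin_ext_cong) (use eq supp_dec[OF h(1)] h(2) in auto)
    then show ?thesis using False c by (simp add: FF_def)
  qed
qed

lemma NW_eq: "NW w = FF NW w"
  unfolding NW_def by (subst wfrec_fixpoint[OF wf_rel adm]) simp

lemma NW_nf: "nf_word R w \<Longrightarrow> NW w = wd w"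
  by (subst NW_eq) (simp add: FF_def)

lemma NW_red: "\<not> nf_word R w \<Longrightarrow> cd w = (u,g,v) \<Longrightarrow> NW w = lin_ext NW (\<lambda>x. wd w x - ctx u g v x)"
  by (subst NW_eq) (simp add: FF_def)

lemma NW_props: "NW w \<in> TV \<and> supp (NW w) \<subseteq> {z. z = w \<or> (z,w) \<in> rel} \<and> nf R (NW w)"
proof (induction w rule: wf_induct_rule[OF wf_rel])
  case (1 w)
  show ?case
  proof (cases "nf_word R w")
    case True
    have "nf R (wd w)" using True by (simp add: nf_def wd_def)
    then show ?thesis using True by (simp add: NW_nf supp_wd)
  next
    case False
    obtain u h v where c: "cd w = (u,h,v)" by (cases "cd w") auto
    from cd[OF False c] have h: "h \<in> R" "w = u @ lm h @ v" by auto
    let ?d = "\<lambda>x. wd w x - ctx u h v x"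
    have sd: "\<And>z. z \<in> supp ?d \<Longrightarrow> (z, w) \<in> rel" using supp_dec[OF h(1)] h(2) by auto
    have e: "NW w = lin_ext NW ?d" using NW_red[OF False c] .
    have "NW w \<in> TV" unfolding e using 1 sd dec_TV[OF h(1)] by (auto intro!: lin_ext_TV)
    moreover have "supp (NW w) \<subseteq> {z. z = w \<or> (z,w) \<in> rel}"
      unfolding e using supp_lin_ext[of NW ?d] 1 sd trans_rel by blast
    moreover have "nf R (NW w)"
    proof -
      have "\<And>z. z \<in> supp (NW w) \<Longrightarrow> nf_word R z"
        unfolding e using supp_lin_ext[of NW ?d] 1 sd by (force simp: nf_def supp_def)
      then show ?thesis by (auto simp: nf_def supp_def)
    qed
    ultimately show ?thesis by blast
  qed
qed

definition NL :: "('x,'k) tv \<Rightarrow> ('x,'k) tv" where "NL = lin_ext NW"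

end


lemma sum_single: "finite S \<Longrightarrow> a \<in> S \<Longrightarrow> (\<And>y. y \<in> S \<Longrightarrow> y \<noteq> a \<Longrightarrow> f y = 0) \<Longrightarrow> sum f S = (f a :: 'a::comm_monoid_add)"
  by (simp add: sum.remove sum.neutral)

context pres begin

lemma NL_lc: "finite S \<Longrightarrow> (\<And>x. x\<in>S \<Longrightarrow> F x \<in> TV) \<Longrightarrow> NL (lc S c F) = lc S c (\<lambda>x. NL (F x))"
  unfolding NL_def by (rule lin_ext_lc)

lemma NL_ctx: "g \<in> TV \<Longrightarrow> NL (ctx u g v) = lc (supp g) g (\<lambda>y. NW (u @ y @ v))"
  unfolding NL_def by (rule lin_ext_ctx)

lemma lm_supp: "g \<in> R \<Longrightarrow> lm g \<in> supp g" using lm_coeff by (force simp: supp_def)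

definition KL :: "'x list \<Rightarrow> bool" where
  "KL w \<longleftrightarrow> (\<forall>u g v. g \<in> R \<longrightarrow> w = u @ lm g @ v \<longrightarrow> NL (ctx u g v) = (\<lambda>_. 0))"

lemma KL_pt: "KL x \<Longrightarrow> g \<in> R \<Longrightarrow> x = u @ lm g @ v \<Longrightarrow> (\<Sum>y\<in>supp g. g y * NW (u @ y @ v) p) = 0"
proof -
  assume a: "KL x" "g \<in> R" "x = u @ lm g @ v"
  then have "NL (ctx u g v) p = 0" unfolding KL_def by auto
  then show ?thesis using NL_ctx[OF R_TV[OF a(2)]] by (simp add: lc_def)
qed

lemma disj_case:
  assumes IH: "\<And>x. (x, w) \<in> rel \<Longrightarrow> KL x"
    and g: "g1 \<in> R" "g2 \<in> R" and w: "w = u1 @ lm g1 @ b @ lm g2 @ v2"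
  shows "NL (ctx u1 g1 (b @ lm g2 @ v2)) = NL (ctx (u1 @ lm g1 @ b) g2 v2)"
proof (rule ext)
  fix p
  let ?S1 = "supp g1" and ?S2 = "supp g2" and ?L1 = "lm g1" and ?L2 = "lm g2"
  define M where "M = (\<lambda>y z. NW (u1 @ y @ b @ z @ v2) p)"
  have f1: "finite ?S1" "finite ?S2" using R_TV g by (auto simp: TV_def)
  have A: "(\<Sum>z\<in>?S2. g2 z * M y z) = 0" if "y \<in> ?S1" "y \<noteq> ?L1" for y
  proof -
    have "(u1 @ y @ b @ ?L2 @ v2, w) \<in> rel" using ctx_rel[OF g(1), of y u1 "b @ ?L2 @ v2"] that w
      by (auto simp: supp_def)
    then have "KL (u1 @ y @ b @ ?L2 @ v2)" by (rule IH)
    from KL_pt[OF this g(2), of "u1 @ y @ b" v2 p] show ?thesis by (simp add: M_def)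
  qed
  have B: "(\<Sum>y\<in>?S1. g1 y * M y z) = 0" if "z \<in> ?S2" "z \<noteq> ?L2" for z
  proof -
    have "((u1 @ ?L1 @ b) @ z @ v2, (u1 @ ?L1 @ b) @ ?L2 @ v2) \<in> rel" using ctx_rel[OF g(2), of z "u1 @ ?L1 @ b" v2] that
      by (auto simp: supp_def)
    then have "KL (u1 @ ?L1 @ b @ z @ v2)" using IH w by simp
    from KL_pt[OF this g(1), of u1 "b @ z @ v2" p] show ?thesis by (simp add: M_def)
  qed
  have "(\<Sum>y\<in>?S1. \<Sum>z\<in>?S2. g1 y * g2 z * M y z) = (\<Sum>y\<in>?S1. g1 y * (\<Sum>z\<in>?S2. g2 z * M y z))"
    by (simp add: sum_distrib_left mult.assoc)
  also have "\<dots> = g1 ?L1 * (\<Sum>z\<in>?S2. g2 z * M ?L1 z)"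
    by (rule sum_single) (use f1 lm_supp[OF g(1)] A in auto)
  also have "\<dots> = (\<Sum>z\<in>?S2. g2 z * M ?L1 z)" using lm_coeff[OF g(1)] by simp
  finally have 1: "(\<Sum>y\<in>?S1. \<Sum>z\<in>?S2. g1 y * g2 z * M y z) = (\<Sum>z\<in>?S2. g2 z * M ?L1 z)" .
  have "(\<Sum>y\<in>?S1. \<Sum>z\<in>?S2. g1 y * g2 z * M y z) = (\<Sum>z\<in>?S2. g2 z * (\<Sum>y\<in>?S1. g1 y * M y z))"
    by (simp add: sum_distrib_left sum.swap[of _ ?S1] algebra_simps)
  also have "\<dots> = g2 ?L2 * (\<Sum>y\<in>?S1. g1 y * M y ?L2)"
    by (rule sum_single) (use f1 lm_supp[OF g(2)] B in auto)
  also have "\<dots> = (\<Sum>y\<in>?S1. g1 y * M y ?L2)" using lm_coeff[OF g(2)] by simp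
  finally have 2: "(\<Sum>y\<in>?S1. \<Sum>z\<in>?S2. g1 y * g2 z * M y z) = (\<Sum>y\<in>?S1. g1 y * M y ?L2)" .
  show "NL (ctx u1 g1 (b @ ?L2 @ v2)) p = NL (ctx (u1 @ ?L1 @ b) g2 v2) p"
    using 1 2 by (simp add: NL_ctx R_TV g lc_def M_def)
qed

end


lemma rmul_Nil[simp]: "rmul f [] = f" by (rule ext) (simp add: rmul_def)
lemma lmul_Nil[simp]: "lmul [] f = f" by (rule ext) (simp add: lmul_def)
lemma lmul_lmul: "f \<in> TV \<Longrightarrow> lmul a (lmul t f) = lmul (a @ t) (f :: ('x,'k::comm_semiring_1) tv)"
  by (subst (1 2) expand[of f]) (simp_all add: lmul_lc lmul_wd)
lemma rmul_rmul: "f \<in> TV \<Longrightarrow> rmul (rmul f v) b = rmul (f :: ('x,'k::comm_semiring_1) tv) (v @ b)"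
  by (subst (1 2) expand[of f]) (simp_all add: rmul_lc rmul_wd)
lemma lmul_rmul: "f \<in> TV \<Longrightarrow> lmul a (rmul f b) = rmul (lmul a f) (b :: 'x list) "
  by (subst (1 2) expand[of f]) (simp_all add: rmul_lc rmul_wd lmul_lc lmul_wd)


lemma lmul_TV: "f \<in> TV \<Longrightarrow> lmul a (f :: ('x,'k::comm_semiring_1) tv) \<in> TV"
  by (subst expand[of f]) (auto simp: lmul_lc lmul_wd intro!: lc_TV TV_finite)
lemma rmul_TV: "f \<in> TV \<Longrightarrow> rmul (f :: ('x,'k::comm_semiring_1) tv) b \<in> TV"
  by (subst expand[of f]) (auto simp: rmul_lc rmul_wd intro!: lc_TV TV_finite)
lemma lmul_diff: "lmul a (\<lambda>u. (f::('x,'k::comm_ring_1) tv) u - g u) = (\<lambda>u. lmul a f u - lmul a g u)"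
  by (rule ext) (simp add: lmul_def)
lemma rmul_diff: "rmul (\<lambda>u. (f::('x,'k::comm_ring_1) tv) u - g u) b = (\<lambda>u. rmul f b u - rmul g b u)"
  by (rule ext) (simp add: rmul_def)
lemma diff_TV: "f \<in> TV \<Longrightarrow> g \<in> TV \<Longrightarrow> (\<lambda>u. (f::('x,'k::comm_ring_1) tv) u - g u) \<in> TV"
proof -
  assume "f \<in> TV" "g \<in> TV"
  moreover have "supp (\<lambda>u. f u - g u) \<subseteq> supp f \<union> supp g" unfolding supp_def by auto
  ultimately show ?thesis unfolding TV_def by (auto intro: finite_subset)
qed

lemma lin_ext_diff: "f \<in> TV \<Longrightarrow> g \<in> TV \<Longrightarrow> lin_ext G (\<lambda>u. (f::('x,'k::comm_ring_1) tv) u - g u) = (\<lambda>u. lin_ext G f u - lin_ext G g u)"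
  using lin_ext_add[of f g G 1 "-1"] by simp

context pres begin

lemma NL_diff: "f \<in> TV \<Longrightarrow> g \<in> TV \<Longrightarrow> NL (\<lambda>u. f u - g u) = (\<lambda>u. NL f u - NL g u)"
  unfolding NL_def by (rule lin_ext_diff)

lemma NL_wd: "NL (wd x) = NW x" unfolding NL_def by (rule lin_ext_wd)

definition redop :: "('x list \<Rightarrow> ('x,'k) tv) \<Rightarrow> bool" where
  "redop G \<longleftrightarrow> (\<forall>x. G x = wd x \<or> (\<exists>t g v. g \<in> R \<and> x = t @ lm g @ v \<and> G x = (\<lambda>u. wd x u - ctx t g v u)))"

lemma ctx_dec: "g \<in> R \<Longrightarrow> ctx a (\<lambda>u. wd x u - ctx t g v u) b = (\<lambda>u. wd (a @ x @ b) u - ctx (a @ t) g (v @ b) u)"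
  using R_TV[of g]
  by (simp add: lmul_diff rmul_diff lmul_wd rmul_wd lmul_lmul lmul_rmul rmul_rmul lmul_TV ctx_TV)

lemma wstep_word:
  assumes IH: "\<And>x. (x, a @ W @ b) \<in> rel \<Longrightarrow> KL x" and G: "redop G" and x: "(x, W) \<in> rel"
  shows "G x \<in> TV \<and> (\<forall>z\<in>supp (G x). (z, W) \<in> rel) \<and> NL (ctx a (G x) b) = NW (a @ x @ b)"
proof -
  have axb: "(a @ x @ b, a @ W @ b) \<in> rel" using x by (auto simp: rel_def intro: ctx_less)
  from G consider "G x = wd x" | t g v where "g \<in> R" "x = t @ lm g @ v" "G x = (\<lambda>u. wd x u - ctx t g v u)"
    unfolding redop_def by blast
  then show ?thesis
  proof cases
    case 1 then show ?thesis using x by (simp add: supp_wd lmul_wd rmul_wd NL_wd)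
  next
    case 2
    have "G x \<in> TV" using 2 dec_TV by simp
    moreover have "\<forall>z\<in>supp (G x). (z, W) \<in> rel" using 2 supp_dec[OF 2(1), of _ t v] x trans_rel by auto
    moreover have "NL (ctx a (G x) b) = NW (a @ x @ b)"
    proof -
      have k: "KL (a @ x @ b)" by (rule IH[OF axb])
      have "NL (ctx (a @ t) g (v @ b)) = (\<lambda>_. 0)" using k 2 unfolding KL_def by auto
      then show ?thesis using 2 R_TV[OF 2(1)]
        by (simp add: ctx_dec NL_diff ctx_TV NL_wd)
    qed
    ultimately show ?thesis by blast
  qed
qed

lemma wstep:
  assumes IH: "\<And>x. (x, a @ W @ b) \<in> rel \<Longrightarrow> KL x" and G: "redop G"
    and h: "h \<in> TV" "\<forall>z\<in>supp h. (z, W) \<in> rel"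
  shows "lin_ext G h \<in> TV \<and> (\<forall>z\<in>supp (lin_ext G h). (z, W) \<in> rel) \<and> NL (ctx a (lin_ext G h) b) = NL (ctx a h b)"
proof -
  note ws = wstep_word[OF IH G]
  have f: "finite (supp h)" using h TV_finite by auto
  have e: "lin_ext G h = lc (supp h) h G" by (rule lin_ext_expand[OF f]) simp
  have 1: "lin_ext G h \<in> TV" using e f ws h by (auto intro!: lc_TV)
  have 2: "\<forall>z\<in>supp (lin_ext G h). (z, W) \<in> rel" using supp_lin_ext[of G h] ws h by blast
  have "NL (ctx a (lin_ext G h) b) = lc (supp h) h (\<lambda>x. NL (ctx a (G x) b))"
    unfolding e lmul_lc rmul_lc using f ws h by (subst NL_lc) (auto intro!: rmul_TV lmul_TV)
  also have "\<dots> = lc (supp h) h (\<lambda>x. NL (ctx a (wd x) b))"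
    unfolding lc_def using ws h by (intro ext sum.cong refl) (simp add: lmul_wd rmul_wd NL_wd)
  also have "\<dots> = NL (ctx a h b)"
    apply (subst (3) expand[OF h(1)])
    unfolding lmul_lc rmul_lc using f by (subst NL_lc) (auto simp: lmul_wd rmul_wd)
  finally show ?thesis using 1 2 by blast
qed

end


lemma split_same: "u1 @ L1 @ v1 = u2 @ L2 @ v2 \<Longrightarrow> length L1 = length L2 \<Longrightarrow> length u1 = length u2 \<Longrightarrow> u1 = u2 \<and> L1 = L2 \<and> v1 = v2"
  by (metis append_eq_append_conv)

lemma split_disj:
  assumes e: "u1 @ L1 @ v1 = u2 @ L2 @ v2" and "length u1 + length L1 \<le> length u2"
  shows "\<exists>b. u2 = u1 @ L1 @ b \<and> v1 = b @ L2 @ v2"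
proof -
  from e have "(u1 @ L1) @ v1 = u2 @ (L2 @ v2)" by simp
  then obtain us where "(u1 @ L1 = u2 @ us \<and> us @ v1 = L2 @ v2) \<or> ((u1 @ L1) @ us = u2 \<and> v1 = us @ L2 @ v2)"
    using append_eq_append_conv2[THEN iffD1] by blast
  then show ?thesis
  proof
    assume a: "u1 @ L1 = u2 @ us \<and> us @ v1 = L2 @ v2"
    then have "us = []" using assms(2) by (metis add_le_same_cancel1 le_zero_eq length_0_conv length_append)
    then show ?thesis using a by auto
  qed auto
qed

lemma split_ov:
  assumes e: "u1 @ L1 @ v1 = u2 @ L2 @ v2" and l: "length L1 = length L2" "length u1 < length u2" "length u2 < length u1 + length L1"
  shows "\<exists>t s. u2 = u1 @ t \<and> v1 = s @ v2 \<and> L1 @ s = t @ L2 \<and> length t = length u2 - length u1"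
proof -
  obtain t where t: "u2 = u1 @ t" using e l(2)
    by (metis append_eq_append_conv_if append_take_drop_id less_imp_le take_all_iff)
  then have e2: "L1 @ v1 = t @ (L2 @ v2)" using e by simp
  have lt: "length t < length L1" using t l by simp
  from e2 obtain us where "(L1 = t @ us \<and> us @ v1 = L2 @ v2) \<or> (L1 @ us = t \<and> v1 = us @ L2 @ v2)"
    using append_eq_append_conv2[THEN iffD1] by blast
  then have "L1 = t @ us \<and> us @ v1 = L2 @ v2" using lt by auto
  then obtain us where u: "L1 = t @ us" "us @ v1 = L2 @ v2" by blast
  have "t \<noteq> []" using t l(2) by auto
  then have "length t > 0" by simp
  moreover have "length L1 = length t + length us" using u(1) by simp
  ultimately have "length us < length L2" using l(1) by linarith
  from u(2) obtain s where "(us = L2 @ s \<and> s @ v1 = v2) \<or> (us @ s = L2 \<and> v1 = s @ v2)"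
    using append_eq_append_conv2[THEN iffD1] by blast
  then have "us @ s = L2 \<and> v1 = s @ v2" using \<open>length us < length L2\<close> by auto
  then show ?thesis using t u by auto
qed


locale pres_sc = pres N R for N :: nat and R :: "('x::{finite,linorder},'k::field) tv set" +
  assumes SC: "side_confluent N R"
begin

lemma the_R: "g \<in> R \<Longrightarrow> (THE g'. g' \<in> R \<and> lm g' = lm g) = g"
  by (rule the_equality) (auto intro: lm_inj)

lemma Sop_wd: "Sop R (wd y) = (if y \<in> lm ` R then (\<lambda>u. wd y u - (THE g. g \<in> R \<and> lm g = y) u) else wd y)"
  unfolding Sop_def by (rule lin_ext_wd)

lemma Sop_lm: "g \<in> R \<Longrightarrow> Sop R (wd (lm g)) = (\<lambda>u. wd (lm g) u - g u)"
  by (simp add: Sop_wd the_R)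

definition GA :: "nat \<Rightarrow> 'x list \<Rightarrow> ('x,'k) tv" where
  "GA m = (\<lambda>w. cat (wd (take m w)) (Sop R (wd (drop m w))))"
definition GB :: "nat \<Rightarrow> 'x list \<Rightarrow> ('x,'k) tv" where
  "GB m = (\<lambda>w. cat (Sop R (wd (take (length w - m) w))) (wd (drop (length w - m) w)))"

lemma A_eq: "idtens m (Sop R) = lin_ext (GA m)" unfolding idtens_def GA_def ..
lemma B_eq: "tensid (Sop R) m = lin_ext (GB m)" unfolding tensid_def GB_def ..

lemma redop_A: "redop (GA m)"
  unfolding redop_def
proof
  fix x
  show "GA m x = wd x \<or> (\<exists>t g v. g \<in> R \<and> x = t @ lm g @ v \<and> GA m x = (\<lambda>u. wd x u - ctx t g v u))"
  proof (cases "drop m x \<in> lm ` R")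
    case True
    then obtain g where g: "g \<in> R" "drop m x = lm g" by auto
    have s: "Sop R (wd (drop m x)) = (\<lambda>u. wd (lm g) u - g u)" using g Sop_lm by simp
    have "GA m x = (\<lambda>u. wd x u - ctx (take m x) g [] u)"
      unfolding GA_def cat_wd_left s lmul_diff lmul_wd using g(2)
      by (metis append_take_drop_id rmul_Nil)
    moreover have "x = take m x @ lm g @ []" using g by (metis append_Nil2 append_take_drop_id)
    ultimately show ?thesis using g by blast
  next
    case False
    then show ?thesis by (simp add: GA_def cat_wd_left Sop_wd lmul_wd)
  qed
qed

lemma redop_B: "redop (GB m)"
  unfolding redop_def
proof
  fix x
  show "GB m x = wd x \<or> (\<exists>t g v. g \<in> R \<and> x = t @ lm g @ v \<and> GB m x = (\<lambda>u. wd x u - ctx t g v u))"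
  proof (cases "take (length x - m) x \<in> lm ` R")
    case True
    then obtain g where g: "g \<in> R" "take (length x - m) x = lm g" by auto
    have s: "Sop R (wd (take (length x - m) x)) = (\<lambda>u. wd (lm g) u - g u)" using g Sop_lm by simp
    have "GB m x = (\<lambda>u. wd x u - ctx [] g (drop (length x - m) x) u)"
      unfolding GB_def cat_wd_right s rmul_diff rmul_wd using g(2)
      by (metis append_take_drop_id lmul_Nil)
    moreover have "x = [] @ lm g @ drop (length x - m) x" using g by (metis append_Nil append_take_drop_id)
    ultimately show ?thesis using g by blast
  next
    case False
    then show ?thesis by (simp add: GB_def cat_wd_right Sop_wd rmul_wd)
  qed
qed

lemma alt_inv:
  assumes IH0: "\<forall>x. (x, a @ W @ b) \<in> rel \<longrightarrow> KL x" and G1: "redop G1" and G2: "redop G2"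
    and h0: "lin_ext G2 (wd W) \<in> TV" "\<forall>z\<in>supp (lin_ext G2 (wd W)). (z, W) \<in> rel"
  shows "alt (lin_ext G1) (lin_ext G2) (Suc j) (wd W) \<in> TV
      \<and> (\<forall>z\<in>supp (alt (lin_ext G1) (lin_ext G2) (Suc j) (wd W)). (z, W) \<in> rel)
      \<and> NL (ctx a (alt (lin_ext G1) (lin_ext G2) (Suc j) (wd W)) b) = NL (ctx a (lin_ext G2 (wd W)) b)"
proof (induction j)
  have IH: "\<And>x. (x, a @ W @ b) \<in> rel \<Longrightarrow> KL x" using IH0 by blast
  case 0 then show ?case using h0 by simp
next
  have IH: "\<And>x. (x, a @ W @ b) \<in> rel \<Longrightarrow> KL x" using IH0 by blast
  case (Suc j)
  let ?h = "alt (lin_ext G1) (lin_ext G2) (Suc j) (wd W)"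
  have e: "alt (lin_ext G1) (lin_ext G2) (Suc (Suc j)) (wd W) = (if even (Suc j) then lin_ext G2 ?h else lin_ext G1 ?h)"
    by simp
  show ?case
  proof (cases "even (Suc j)")
    case True
    then show ?thesis using wstep[OF IH G2, where h="?h"] Suc by (simp only: e if_True) auto
  next
    case False
    then show ?thesis using wstep[OF IH G1, where h="?h"] Suc by (simp only: e if_False) auto
  qed
qed

lemma overlap_case:
  assumes IH: "\<And>x. (x, a @ W @ b) \<in> rel \<Longrightarrow> KL x" and g: "g1 \<in> R" "g2 \<in> R"
    and W1: "W = lm g1 @ s" and W2: "W = t @ lm g2" and m: "length t = m" "1 \<le> m" "m \<le> N - 1"
  shows "NL (ctx a g1 (s @ b)) = NL (ctx (a @ t) g2 b)"
proof -
  have IH0: "\<forall>x. (x, a @ W @ b) \<in> rel \<longrightarrow> KL x" using IH by blast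
  have lW: "length W = N + m" using W2 m lm_len[OF g(2)] by simp
  have ls: "length s = m" using W1 lW lm_len[OF g(1)] by simp
  have BW: "lin_ext (GB m) (wd W) = (\<lambda>u. wd W u - ctx [] g1 s u)"
    using lW ls W1 lm_len[OF g(1)] g(1)
    by (simp add: lin_ext_wd GB_def cat_wd_right Sop_lm rmul_diff rmul_wd)
  have AW: "lin_ext (GA m) (wd W) = (\<lambda>u. wd W u - ctx t g2 [] u)"
    using W2 m g(2)
    by (simp add: lin_ext_wd GA_def cat_wd_left Sop_lm lmul_diff lmul_wd)
  have W1': "W = [] @ lm g1 @ s" using W1 by simp
  have W2': "W = t @ lm g2 @ []" using W2 by simp
  have hB: "lin_ext (GB m) (wd W) \<in> TV" "\<forall>z\<in>supp (lin_ext (GB m) (wd W)). (z, W) \<in> rel"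
    unfolding BW using dec_TV[OF g(1), of W "[]" s] supp_dec[OF g(1), of _ "[]" s] W1' by (simp_all del: lmul_Nil)
  have hA: "lin_ext (GA m) (wd W) \<in> TV" "\<forall>z\<in>supp (lin_ext (GA m) (wd W)). (z, W) \<in> rel"
    unfolding AW using dec_TV[OF g(2), of W t "[]"] supp_dec[OF g(2), of _ t "[]"] W2' by (simp_all del: rmul_Nil)
  obtain k where k: "k \<ge> 1" "\<forall>f\<in>hom (N + m). alt (idtens m (Sop R)) (tensid (Sop R) m) k f
        = alt (tensid (Sop R) m) (idtens m (Sop R)) k f"
    using SC m unfolding side_confluent_def by blast
  obtain j where j: "k = Suc j" using k(1) by (cases k) auto
  have "(wd W :: ('x,'k) tv) \<in> TV" by simp
  then have Whom: "(wd W :: ('x,'k) tv) \<in> hom (N + m)" using lW unfolding hom_def TV_def by (auto simp: wd_def)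
  have eq: "alt (lin_ext (GA m)) (lin_ext (GB m)) (Suc j) (wd W) = alt (lin_ext (GB m)) (lin_ext (GA m)) (Suc j) (wd W)"
    using k(2) Whom j by (simp add: A_eq B_eq)
  have "NL (ctx a (lin_ext (GB m) (wd W)) b) = NL (ctx a (lin_ext (GA m) (wd W)) b)"
  proof -
    have 1: "NL (ctx a (alt (lin_ext (GA m)) (lin_ext (GB m)) (Suc j) (wd W)) b) = NL (ctx a (lin_ext (GB m) (wd W)) b)"
      using alt_inv[where a=a and b=b and W=W, OF IH0 redop_A[of m] redop_B[of m] hB, where j=j] by (elim conjE)
    have 2: "NL (ctx a (alt (lin_ext (GB m)) (lin_ext (GA m)) (Suc j) (wd W)) b) = NL (ctx a (lin_ext (GA m) (wd W)) b)"
      using alt_inv[where a=a and b=b and W=W, OF IH0 redop_B[of m] redop_A[of m] hA, where j=j] by (elim conjE)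
    show ?thesis using 1 2 eq by simp
  qed
  then have "NL (\<lambda>u. wd (a @ W @ b) u - ctx (a @ []) g1 (s @ b) u) = NL (\<lambda>u. wd (a @ W @ b) u - ctx (a @ t) g2 ([] @ b) u)"
    unfolding BW AW ctx_dec[OF g(1)] ctx_dec[OF g(2)] .
  then have "(\<lambda>u. NW (a @ W @ b) u - NL (ctx a g1 (s @ b)) u) = (\<lambda>u. NW (a @ W @ b) u - NL (ctx (a @ t) g2 b) u)"
    using R_TV g by (simp add: NL_diff ctx_TV NL_wd)
  then show ?thesis by (simp add: fun_eq_iff)
qed

end


context pres_sc begin

lemma two_dec:
  assumes IH: "\<And>x. (x, w) \<in> rel \<Longrightarrow> KL x" and g: "g1 \<in> R" "g2 \<in> R"
    and w1: "w = u1 @ lm g1 @ v1" and w2: "w = u2 @ lm g2 @ v2" and l: "length u1 \<le> length u2"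
  shows "NL (ctx u1 g1 v1) = NL (ctx u2 g2 v2)"
proof -
  have e: "u1 @ lm g1 @ v1 = u2 @ lm g2 @ v2" using w1 w2 by simp
  have lL: "length (lm g1) = length (lm g2)" using lm_len g by simp
  consider "length u1 = length u2" | "length u1 + N \<le> length u2" | "length u1 < length u2" "length u2 < length u1 + N"
    using l by linarith
  then show ?thesis
  proof cases
    case 1
    then have "u1 = u2 \<and> lm g1 = lm g2 \<and> v1 = v2" using split_same[OF e lL] by blast
    then show ?thesis using lm_inj[OF g] by metis
  next
    case 2
    have "\<exists>b. u2 = u1 @ lm g1 @ b \<and> v1 = b @ lm g2 @ v2"
      using split_disj[OF e] lm_len[OF g(1)] 2 by simp
    then obtain b where b: "u2 = u1 @ lm g1 @ b" "v1 = b @ lm g2 @ v2" by blast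
    have w': "w = u1 @ lm g1 @ b @ lm g2 @ v2" using w1 b by simp
    show ?thesis using disj_case[OF IH g w'] b by simp
  next
    case 3
    have "\<exists>t s. u2 = u1 @ t \<and> v1 = s @ v2 \<and> lm g1 @ s = t @ lm g2 \<and> length t = length u2 - length u1"
      by (rule split_ov[OF e lL 3(1)]) (use lm_len[OF g(1)] 3(2) in simp)
    then obtain t s where ts: "u2 = u1 @ t" "v1 = s @ v2" "lm g1 @ s = t @ lm g2" "length t = length u2 - length u1"
      by blast
    have w: "w = u1 @ (lm g1 @ s) @ v2" using w1 ts(2) by simp
    have IH': "\<And>x. (x, u1 @ (lm g1 @ s) @ v2) \<in> rel \<Longrightarrow> KL x" using IH unfolding w[symmetric] .
    have m: "1 \<le> length t" "length t \<le> N - 1" using ts(4) 3 by linarith+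
    have "NL (ctx u1 g1 (s @ v2)) = NL (ctx (u1 @ t) g2 v2)"
      by (rule overlap_case[OF IH' g refl ts(3) refl m])
    then show ?thesis using ts(1,2) by simp
  qed
qed

lemma KL_all: "KL w"
proof (induction w rule: wf_induct_rule[OF wf_rel])
  case (1 w)
  show ?case unfolding KL_def
  proof (intro allI impI)
    fix u g v assume g: "g \<in> R" and w: "w = u @ lm g @ v"
    then have nnf: "\<not> nf_word R w" by (auto simp: nf_word_def)
    obtain u0 g0 v0 where c: "cd w = (u0, g0, v0)" by (cases "cd w") auto
    from cd[OF nnf c] have g0: "g0 \<in> R" "w = u0 @ lm g0 @ v0" by auto
    have "NW w = NL (\<lambda>x. wd w x - ctx u0 g0 v0 x)" using NW_red[OF nnf c] by (simp add: NL_def)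
    also have "\<dots> = (\<lambda>x. NW w x - NL (ctx u0 g0 v0) x)"
      using R_TV[OF g0(1)] by (simp add: NL_diff ctx_TV NL_wd)
    finally have z: "NL (ctx u0 g0 v0) = (\<lambda>_. 0)" by (simp add: fun_eq_iff)
    have "NL (ctx u g v) = NL (ctx u0 g0 v0)"
    proof (cases "length u \<le> length u0")
      case True then show ?thesis using two_dec[OF 1 g g0(1) w g0(2)] by simp
    next
      case False then show ?thesis using two_dec[OF 1 g0(1) g g0(2) w] by simp
    qed
    then show "NL (ctx u g v) = (\<lambda>_. 0)" using z by simp
  qed
qed

end


lemma cat_ctx: "cat (cat (wd u) g) (wd v) = ctx u g v"
  by (simp add: cat_wd_left cat_wd_right)

context pres_sc begin

lemma NL_ctx0: "g \<in> R \<Longrightarrow> NL (ctx u g v) = (\<lambda>_. 0)"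
  using KL_all[of "u @ lm g @ v"] unfolding KL_def by auto

lemma red_NL: "red R f f' \<Longrightarrow> f \<in> TV \<Longrightarrow> f' \<in> TV \<and> NL f' = NL f"
proof -
  assume r: "red R f f'" and f: "f \<in> TV"
  then obtain u v g where g: "g \<in> R" and e: "f' = (\<lambda>x. f x - f (u @ lm g @ v) * ctx u g v x)"
    unfolding red_def cat_ctx by blast
  let ?c = "f (u @ lm g @ v)"
  have e2: "f' = (\<lambda>x. 1 * f x + (- ?c) * ctx u g v x)" using e by simp
  have ct: "ctx u g v \<in> TV" using ctx_TV R_TV g by blast
  have "supp f' \<subseteq> supp f \<union> supp (ctx u g v)" unfolding e supp_def by auto
  then have "f' \<in> TV" using f ct unfolding TV_def by (auto intro: finite_subset)
  moreover have "NL f' = NL f" unfolding e2 NL_def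
    by (subst lin_ext_add[OF f ct]) (simp add: NL_ctx0[OF g, unfolded NL_def])
  ultimately show ?thesis by blast
qed

lemma reds_NL: "(red R)\<^sup>*\<^sup>* f h \<Longrightarrow> f \<in> TV \<Longrightarrow> h \<in> TV \<and> NL h = NL f"
  by (induction rule: rtranclp_induct) (auto dest: red_NL)

lemma NL_nf: "h \<in> TV \<Longrightarrow> nf R h \<Longrightarrow> NL h = h"
proof -
  assume h: "h \<in> TV" "nf R h"
  have f: "finite (supp h)" using h TV_finite by blast
  have "NL h = lc (supp h) h NW" unfolding NL_def by (rule lin_ext_expand[OF f]) simp
  also have "\<dots> = lc (supp h) h wd" unfolding lc_def
    using h(2) by (intro ext sum.cong refl) (simp add: NW_nf nf_def supp_def)
  also have "\<dots> = h" using expand[OF h(1)] by simp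
  finally show ?thesis .
qed

definition bad :: "('x,'k) tv \<Rightarrow> 'x list set" where
  "bad f = {x \<in> supp f. \<not> nf_word R x}"

lemma terminate: "f \<in> TV \<Longrightarrow> \<exists>h. (red R)\<^sup>*\<^sup>* f h \<and> nf R h"
proof (induction f rule: wf_induct_rule[OF wf_inv_image[OF wf_mult[OF wf_rel], of "\<lambda>f. mset_set (bad f)"]])
  case (1 f)
  show ?case
  proof (cases "bad f = {}")
    case True
    then have "nf R f" by (auto simp: bad_def nf_def supp_def)
    then show ?thesis by blast
  next
    case False
    then obtain w where w: "w \<in> bad f" by blast
    then have "\<not> nf_word R w" by (simp add: bad_def)
    then obtain u g v where g: "g \<in> R" and wd: "w = u @ lm g @ v" by (auto simp: nf_word_def)
    define f' where "f' = (\<lambda>x. f x - f (u @ lm g @ v) * ctx u g v x)"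
    have r: "red R f f'" unfolding red_def cat_ctx f'_def using g by blast
    have f'TV: "f' \<in> TV" using red_NL[OF r 1(2)] by blast
    have fin: "finite (bad f)" "finite (bad f')" using 1(2) f'TV by (auto simp: bad_def TV_def)
    have sub: "x \<notin> bad f \<Longrightarrow> x \<in> bad f' \<Longrightarrow> (x, w) \<in> rel" for x
    proof -
      assume a: "x \<notin> bad f" "x \<in> bad f'"
      have "ctx u g v x \<noteq> 0" using a by (auto simp: bad_def supp_def f'_def)
      then obtain y where y: "x = u @ y @ v" "g y \<noteq> 0" using ctx_nz by blast
      have "x \<noteq> w"
      proof
        assume "x = w"
        then have "f' x = 0" using lm_coeff[OF g] by (simp add: f'_def wd)
        then show False using a by (simp add: bad_def supp_def)
      qed
      then have "y \<noteq> lm g" using y wd by auto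
      then show ?thesis using ctx_rel[OF g y(2)] y wd by simp
    qed
    have wnot: "w \<notin> bad f'"
      using lm_coeff[OF g] by (simp add: bad_def supp_def f'_def wd)
    let ?I = "bad f' \<inter> bad f" and ?K = "bad f' - bad f" and ?J = "bad f - bad f'"
    have e1: "mset_set (bad f') = mset_set ?I + mset_set ?K"
      using fin by (subst mset_set_Union[symmetric]) (auto intro: arg_cong[where f=mset_set])
    have e2: "mset_set (bad f) = mset_set ?I + mset_set ?J"
      using fin by (subst mset_set_Union[symmetric]) (auto intro: arg_cong[where f=mset_set])
    have "(mset_set ?I + mset_set ?K, mset_set ?I + mset_set ?J) \<in> mult rel"
    proof (rule one_step_implies_mult)
      have "w \<in> ?J" using w wnot by blast
      then show "mset_set ?J \<noteq> {#}" using fin by (metis finite_Diff mset_set_empty_iff empty_iff)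
      show "\<forall>k\<in>#mset_set ?K. \<exists>j\<in>#mset_set ?J. (k, j) \<in> rel"
        using sub w wnot fin by auto
    qed
    then have "(f', f) \<in> inv_image (mult rel) (\<lambda>f. mset_set (bad f))" using e1 e2 by simp
    from 1(1)[OF this f'TV] obtain h where "(red R)\<^sup>*\<^sup>* f' h" "nf R h" by blast
    then show ?thesis using r by (meson converse_rtranclp_into_rtranclp)
  qed
qed

lemma phi_eq: "f \<in> TV \<Longrightarrow> phi R f = NL f"
proof -
  assume f: "f \<in> TV"
  obtain h where h: "(red R)\<^sup>*\<^sup>* f h" "nf R h" using terminate[OF f] by blast
  have hh: "h = NL f" using reds_NL[OF h(1) f] NL_nf h(2) by metis
  show ?thesis unfolding phi_def
  proof (rule the_equality)
    show "(red R)\<^sup>*\<^sup>* f (NL f) \<and> nf R (NL f)" using h hh by simp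
    fix h' assume "(red R)\<^sup>*\<^sup>* f h' \<and> nf R h'"
    then show "h' = NL f" using reds_NL[of f h'] f NL_nf by metis
  qed
qed

end


lemma hom_TV: "hom m \<subseteq> TV" by (auto simp: hom_def TV_def)

lemma lspan_smul: "h \<in> lspan S \<Longrightarrow> (\<lambda>x. b * h x) \<in> lspan S"
proof (induction rule: lspan.induct)
  case lspan_zero then show ?case using lspan.lspan_zero by simp
next
  case (lspan_step f g c)
  have "(\<lambda>x. (b*c) * g x + b * f x) \<in> lspan S"
    by (rule lspan.lspan_step[OF lspan_step.IH lspan_step.hyps(2)])
  then show ?case by (simp add: algebra_simps)
qed

lemma lspan_add: "f \<in> lspan S \<Longrightarrow> h \<in> lspan S \<Longrightarrow> (\<lambda>x. f x + h x) \<in> lspan S"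
proof (induction rule: lspan.induct)
  case lspan_zero then show ?case by simp
next
  case (lspan_step f g c)
  then show ?case using lspan.lspan_step[of "\<lambda>x. f x + h x" S g c] by (simp add: algebra_simps)
qed

lemma lspan_gen: "g \<in> S \<Longrightarrow> g \<in> lspan S"
  using lspan.lspan_step[OF lspan.lspan_zero, of g S 1] by simp

lemma lspan_lc: "finite A \<Longrightarrow> (\<And>a. a \<in> A \<Longrightarrow> F a \<in> lspan S) \<Longrightarrow> lc A c F \<in> lspan S"
proof (induction A rule: finite_induct)
  case empty then show ?case using lspan.lspan_zero by (simp add: lc_def)
next
  case (insert a A)
  have "lc (insert a A) c F = (\<lambda>x. c a * F a x + lc A c F x)" using insert(1,2) by (simp add: lc_def)
  then show ?case using lspan_add[OF lspan_smul[OF insert(4)[of a]] insert(3)] insert(4) by simp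
qed

lemma lspan_sub: "f \<in> lspan S \<Longrightarrow> h \<in> lspan S \<Longrightarrow> (\<lambda>x. f x - h x) \<in> lspan S"
  using lspan_add[OF _ lspan_smul[of h S "-1"], of f] by simp

lemma lspan_mono_closed:
  assumes "f \<in> lspan S" "(\<lambda>_. 0) \<in> K" "\<And>f g c. f \<in> K \<Longrightarrow> g \<in> S \<Longrightarrow> (\<lambda>x. c * g x + f x) \<in> K"
  shows "f \<in> K"
  using assms(1) by (induction rule: lspan.induct) (use assms in auto)

lemma cat_lc_left: "cat (lc A c F) q = lc A c (\<lambda>a. cat (F a) q)"
  unfolding cat_def lc_def
  by (rule ext) (simp add: sum_distrib_right sum_distrib_left sum.swap[of _ A] mult.assoc)

lemma cat_lc_right: "cat p (lc A c F) = lc A c (\<lambda>a. cat p (F a))"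
  unfolding cat_def lc_def
  by (rule ext) (simp add: sum_distrib_right sum_distrib_left sum.swap[of _ A] algebra_simps)

lemma ctx_step: "ctx u (\<lambda>x. c * g x + f x) v = (\<lambda>x. c * ctx u g v x + ctx u f v x)"
  by (rule ext) (simp add: lmul_def rmul_def)
lemma ctx_zero: "ctx u (\<lambda>_. 0) v = (\<lambda>_. 0)"
  by (rule ext) (simp add: lmul_def rmul_def)


lemma cat_step_left: "cat (\<lambda>x. c * g x + f x) q = (\<lambda>x. c * cat g q x + cat f q x)"
  unfolding cat_def by (rule ext) (simp add: algebra_simps sum.distrib sum_distrib_left)
lemma cat_zero_left: "cat (\<lambda>_. 0) q = (\<lambda>_. 0)"
  unfolding cat_def by simp

context pres_sc begin

lemma NL_lin: "f \<in> TV \<Longrightarrow> g \<in> TV \<Longrightarrow> NL (\<lambda>x. a * f x + b * g x) = (\<lambda>x. a * NL f x + b * NL g x)"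
  unfolding NL_def by (rule lin_ext_add)

lemma NL_props: "f \<in> TV \<Longrightarrow> NL f \<in> TV \<and> nf R (NL f) \<and> (\<forall>z\<in>supp (NL f). \<exists>x\<in>supp f. z = x \<or> (z,x) \<in> rel)"
proof -
  assume f: "f \<in> TV"
  have s: "supp (NL f) \<subseteq> (\<Union>x\<in>supp f. supp (NW x))" unfolding NL_def by (rule supp_lin_ext)
  have "NL f \<in> TV" unfolding NL_def using f NW_props by (auto intro: lin_ext_TV)
  moreover have "nf R (NL f)"
  proof -
    have "\<And>z. z \<in> supp (NL f) \<Longrightarrow> nf_word R z" using s NW_props by (force simp: nf_def supp_def)
    then show ?thesis by (auto simp: nf_def supp_def)
  qed
  moreover have "\<forall>z\<in>supp (NL f). \<exists>x\<in>supp f. z = x \<or> (z,x) \<in> rel" using s NW_props by blast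
  ultimately show ?thesis by blast
qed

lemma NL_hom: "f \<in> hom m \<Longrightarrow> NL f \<in> hom m"
proof -
  assume f: "f \<in> hom m"
  then have fT: "f \<in> TV" using hom_TV by blast
  from NL_props[OF fT] have p: "NL f \<in> TV" "\<forall>z\<in>supp (NL f). \<exists>x\<in>supp f. z = x \<or> (z,x) \<in> rel" by auto
  have "\<And>z. NL f z \<noteq> 0 \<Longrightarrow> length z = m"
  proof -
    fix z assume "NL f z \<noteq> 0"
    then obtain x where "x \<in> supp f" "z = x \<or> (z,x) \<in> rel" using p(2) by (auto simp: supp_def)
    then show "length z = m" using f by (auto simp: supp_def hom_def rel_def)
  qed
  then show ?thesis using p(1) by (auto simp: hom_def TV_def)
qed

lemma red_op: "reduction_operator m (phi R)"
  unfolding reduction_operator_def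
proof (intro conjI ballI allI)
  fix f :: "('x,'k) tv" assume f: "f \<in> hom m"
  then have fT: "f \<in> TV" using hom_TV by blast
  show "phi R f \<in> hom m" using NL_hom[OF f] phi_eq[OF fT] by simp
  show "phi R (phi R f) = phi R f"
    using NL_props[OF fT] phi_eq[OF fT] phi_eq NL_nf by simp
  fix c
  have "supp (\<lambda>x. c * f x) \<subseteq> supp f" by (auto simp: supp_def)
  then have "(\<lambda>x. c * f x) \<in> TV" using fT unfolding TV_def by (auto intro: finite_subset)
  then show "phi R (\<lambda>x. c * f x) = (\<lambda>x. c * phi R f x)"
    using NL_lin[OF fT fT, of c 0] phi_eq fT by simp
next
  fix f g :: "('x,'k) tv" assume f: "f \<in> hom m" and g: "g \<in> hom m"
  then have fT: "f \<in> TV" and gT: "g \<in> TV" using hom_TV by blast+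
  have "supp (\<lambda>x. f x + g x) \<subseteq> supp f \<union> supp g" by (auto simp: supp_def)
  then have "(\<lambda>x. f x + g x) \<in> TV" using fT gT unfolding TV_def by (auto intro: finite_subset)
  then show "phi R (\<lambda>x. f x + g x) = (\<lambda>x. phi R f x + phi R g x)"
    using NL_lin[OF fT gT, of 1 1] phi_eq fT gT by simp
next
  fix y :: "'x list"
  show "phi R (wd y) = wd y \<or> (\<forall>x. phi R (wd y) x \<noteq> 0 \<longrightarrow> x < y)"
  proof (cases "nf_word R y")
    case True then show ?thesis using phi_eq[of "wd y"] by (simp add: NL_wd NW_nf)
  next
    case False
    have "\<forall>x. NW y x \<noteq> 0 \<longrightarrow> x < y"
    proof (intro allI impI)
      fix x assume x: "NW y x \<noteq> 0"
      then have "x \<noteq> y" using NW_props[of y] False by (auto simp: nf_def)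
      then show "x < y" using NW_props[of y] x by (auto simp: supp_def rel_def)
    qed
    then show ?thesis using phi_eq[of "wd y"] by (simp add: NL_wd)
  qed
qed

end


context pres_sc begin

abbreviation Gm :: "nat \<Rightarrow> ('x,'k) tv set" where
  "Gm m \<equiv> (\<Union>i\<in>{0..m-N}. tensp (tensp (hom i) (Rbar R)) (hom (m - N - i)))"

lemma wd_hom: "(wd u :: ('x,'k) tv) \<in> hom (length u)"
proof -
  have "(wd u :: ('x,'k) tv) \<in> TV" by simp
  then show ?thesis unfolding hom_def TV_def by (auto simp: wd_def)
qed

lemma ctx_in_I: "g \<in> R \<Longrightarrow> length u + N + length v = m \<Longrightarrow> ctx u g v \<in> lspan (Gm m)"
proof -
  assume g: "g \<in> R" and l: "length u + N + length v = m"
  have gR: "g \<in> Rbar R" unfolding Rbar_def by (rule lspan_gen[OF g])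
  have 1: "cat (wd u) g \<in> tensp (hom (length u)) (Rbar R)"
    unfolding tensp_def by (rule lspan_gen) (use wd_hom gR in blast)
  have lv: "m - N - length u = length v" using l by simp
  have 2: "cat (cat (wd u) g) (wd v) \<in> tensp (tensp (hom (length u)) (Rbar R)) (hom (m - N - length u))"
    unfolding lv tensp_def[of _ "hom (length v)"] by (rule lspan_gen) (use 1 wd_hom in blast)
  have "length u \<in> {0..m-N}" using l by auto
  then have "cat (cat (wd u) g) (wd v) \<in> Gm m" using 2 by blast
  then show ?thesis unfolding cat_ctx[symmetric] by (rule lspan_gen)
qed

lemma lc_diff: "lc S (c :: _ \<Rightarrow> 'k) (\<lambda>y x. F y x - G y x) = (\<lambda>x. lc S c F x - lc S c G x)"
  unfolding lc_def by (rule ext) (simp add: right_diff_distrib sum_subtractf)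

lemma word_I: "length w = m \<Longrightarrow> (\<lambda>x. wd w x - NW w x) \<in> lspan (Gm m)"
proof (induction w rule: wf_induct_rule[OF wf_rel])
  case (1 w)
  show ?case
  proof (cases "nf_word R w")
    case True then show ?thesis using lspan.lspan_zero by (simp add: NW_nf)
  next
    case False
    obtain u g v where c: "cd w = (u,g,v)" by (cases "cd w") auto
    from cd[OF False c] have g: "g \<in> R" "w = u @ lm g @ v" by auto
    define d where "d = (\<lambda>x. wd w x - ctx u g v x)"
    have dT: "d \<in> TV" unfolding d_def by (rule dec_TV[OF g(1)])
    have sd: "\<And>z. z \<in> supp d \<Longrightarrow> (z, w) \<in> rel" unfolding d_def using supp_dec[OF g(1)] g(2) by auto
    have fd: "finite (supp d)" using dT TV_finite by blast
    have e: "NW w = NL d" using NW_red[OF False c] by (simp add: NL_def d_def)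
    have "(\<lambda>x. d x - NL d x) = lc (supp d) d (\<lambda>y. (\<lambda>x. wd y x - NW y x))"
    proof -
      have "NL d = lc (supp d) d NW" unfolding NL_def by (rule lin_ext_expand[OF fd]) simp
      moreover have "d = lc (supp d) d wd" by (rule expand[OF dT])
      ultimately show ?thesis by (simp only: lc_diff)
    qed
    moreover have "lc (supp d) d (\<lambda>y. (\<lambda>x. wd y x - NW y x)) \<in> lspan (Gm m)"
    proof (rule lspan_lc[OF fd])
      fix a assume "a \<in> supp d"
      then have "(a, w) \<in> rel" by (rule sd)
      moreover then have "length a = m" using 1(2) by (simp add: rel_def)
      ultimately show "(\<lambda>x. wd a x - NW a x) \<in> lspan (Gm m)" using 1(1) by blast
    qed
    ultimately have A: "(\<lambda>x. d x - NL d x) \<in> lspan (Gm m)" by simp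
    have B: "ctx u g v \<in> lspan (Gm m)" by (rule ctx_in_I[OF g(1)]) (use 1(2) g(2) lm_len[OF g(1)] in simp)
    have "(\<lambda>x. wd w x - NW w x) = (\<lambda>x. ctx u g v x + (d x - NL d x))"
      unfolding e by (simp add: d_def fun_eq_iff)
    then show ?thesis using lspan_add[OF B A] by simp
  qed
qed

lemma f_I: "f \<in> hom m \<Longrightarrow> (\<lambda>x. f x - NL f x) \<in> lspan (Gm m)"
proof -
  assume f: "f \<in> hom m"
  then have fT: "f \<in> TV" using hom_TV by blast
  have fd: "finite (supp f)" using fT TV_finite by blast
  have "(\<lambda>x. f x - NL f x) = lc (supp f) f (\<lambda>y. (\<lambda>x. wd y x - NW y x))"
  proof -
    have "NL f = lc (supp f) f NW" unfolding NL_def by (rule lin_ext_expand[OF fd]) simp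
    moreover have "f = lc (supp f) f wd" by (rule expand[OF fT])
    ultimately show ?thesis by (simp only: lc_diff)
  qed
  moreover have "lc (supp f) f (\<lambda>y. (\<lambda>x. wd y x - NW y x)) \<in> lspan (Gm m)"
  proof (rule lspan_lc[OF fd])
    fix a assume "a \<in> supp f"
    then have "length a = m" using f by (simp add: hom_def supp_def)
    then show "(\<lambda>x. wd a x - NW a x) \<in> lspan (Gm m)" by (rule word_I)
  qed
  ultimately show ?thesis by simp
qed

end


context pres_sc begin

lemma lc_swap: "lc B d (\<lambda>b. lc A c (\<lambda>a. F a b)) = lc A c (\<lambda>a. lc B d (F a))"
  unfolding lc_def by (rule ext) (simp add: sum_distrib_left sum.swap[of _ A] algebra_simps)

definition Cm :: "nat \<Rightarrow> ('x,'k) tv set" where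
  "Cm m = {ctx u g v | u g v. g \<in> R \<and> length u + N + length v = m}"

lemma Cm_K: "f \<in> lspan (Cm m) \<Longrightarrow> f \<in> hom m \<and> NL f = (\<lambda>_. 0)"
proof (induction rule: lspan.induct)
  case lspan_zero
  have "NL (\<lambda>_. 0) = (\<lambda>_. 0)" by (simp add: NL_def lin_ext_def)
  then show ?case by (simp add: hom_def supp_def)
next
  case (lspan_step f g c)
  from lspan_step(2) obtain u h v where g: "g = ctx u h v" "h \<in> R" "length u + N + length v = m"
    by (auto simp: Cm_def)
  have gT: "g \<in> TV" using g ctx_TV R_TV by blast
  have gl: "\<And>x. g x \<noteq> 0 \<Longrightarrow> length x = m"
  proof -
    fix x assume "g x \<noteq> 0"
    then obtain y where "x = u @ y @ v" "h y \<noteq> 0" using ctx_nz g(1) by blast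
    then show "length x = m" using R_len[OF g(2)] g(3) by auto
  qed
  have fT: "f \<in> TV" using lspan_step hom_TV by blast
  have ng: "NL g = (\<lambda>_. 0)" using g NL_ctx0 by simp
  have "supp (\<lambda>x. c * g x + f x) \<subseteq> supp g \<union> supp f" by (auto simp: supp_def)
  then have T: "(\<lambda>x. c * g x + f x) \<in> TV" using gT fT unfolding TV_def by (auto intro: finite_subset)
  have fl: "\<And>x. f x \<noteq> 0 \<Longrightarrow> length x = m" using lspan_step.IH by (auto simp: hom_def)
  have "\<And>x. c * g x + f x \<noteq> 0 \<Longrightarrow> length x = m"
  proof -
    fix x assume "c * g x + f x \<noteq> 0"
    then have "g x \<noteq> 0 \<or> f x \<noteq> 0" by auto
    then show "length x = m" using gl fl by blast
  qed
  then have "(\<lambda>x. c * g x + f x) \<in> hom m" using T unfolding hom_def TV_def by auto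
  moreover have "NL (\<lambda>x. c * g x + f x) = (\<lambda>_. 0)"
    using NL_lin[OF gT fT, of c 1] ng lspan_step.IH by simp
  ultimately show ?case by blast
qed

lemma ctx_span: "r \<in> lspan R \<Longrightarrow> length u + N + length v = m \<Longrightarrow> ctx u r v \<in> lspan (Cm m)"
proof (induction rule: lspan.induct)
  case lspan_zero then show ?case using lspan.lspan_zero by (simp add: ctx_zero)
next
  case (lspan_step f g c)
  have "ctx u g v \<in> lspan (Cm m)" by (rule lspan_gen) (use lspan_step in \<open>auto simp: Cm_def\<close>)
  then show ?case unfolding ctx_step using lspan_add[OF lspan_smul lspan_step.IH[OF lspan_step.prems]] by blast
qed

lemma cat_span:
  assumes p: "p \<in> hom i" and r: "r \<in> lspan R" and q: "q \<in> hom j" and l: "i + N + j = m"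
  shows "cat (cat p r) q \<in> lspan (Cm m)"
proof -
  have pT: "p \<in> TV" and qT: "q \<in> TV" using p q hom_TV by blast+
  have fp: "finite (supp p)" and fq: "finite (supp q)" using pT qT TV_finite by blast+
  define A where "A = supp p"
  define B where "B = supp q"
  have ep: "p = lc A p wd" unfolding A_def by (rule expand[OF pT])
  have eq: "q = lc B q wd" unfolding B_def by (rule expand[OF qT])
  have "cat (cat (lc A p wd) r) (lc B q wd) = lc A p (\<lambda>u. lc B q (\<lambda>v. ctx u r v))"
    by (simp add: cat_lc_left cat_lc_right cat_ctx) (rule lc_swap)
  then have "cat (cat p r) q = lc A p (\<lambda>u. lc B q (\<lambda>v. ctx u r v))" using ep eq by simp
  then have "cat (cat p r) q = lc (supp p) p (\<lambda>u. lc (supp q) q (\<lambda>v. ctx u r v))" by (simp add: A_def B_def)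
  also have "\<dots> \<in> lspan (Cm m)"
  proof (rule lspan_lc[OF fp])
    fix u assume u: "u \<in> supp p"
    show "lc (supp q) q (\<lambda>v. ctx u r v) \<in> lspan (Cm m)"
    proof (rule lspan_lc[OF fq])
      fix v assume v: "v \<in> supp q"
      have "length u = i" "length v = j" using u v p q by (auto simp: hom_def supp_def)
      then show "ctx u r v \<in> lspan (Cm m)" using ctx_span[OF r, of u v m] l by simp
    qed
  qed
  finally show ?thesis .
qed

lemma inner_span: "p \<in> tensp (hom i) (Rbar R) \<Longrightarrow> q \<in> hom j \<Longrightarrow> i + N + j = m \<Longrightarrow> cat p q \<in> lspan (Cm m)"
  unfolding tensp_def
proof (induction rule: lspan.induct)
  case lspan_zero show ?case unfolding cat_zero_left by (rule lspan.lspan_zero)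
next
  case (lspan_step f g c)
  from lspan_step(2) obtain p' r where g: "g = cat p' r" "p' \<in> hom i" "r \<in> Rbar R" by blast
  have "cat g q \<in> lspan (Cm m)" using cat_span[OF g(2) _ lspan_step.prems] g(1,3) by (simp add: Rbar_def)
  then show ?case unfolding cat_step_left
    using lspan_add[OF lspan_smul lspan_step.IH[OF lspan_step.prems]] by blast
qed

lemma outer_span: "t \<in> tensp (tensp (hom i) (Rbar R)) (hom j) \<Longrightarrow> i + N + j = m \<Longrightarrow> t \<in> lspan (Cm m)"
  unfolding tensp_def[of _ "hom j"]
proof (induction rule: lspan.induct)
  case lspan_zero show ?case by (rule lspan.lspan_zero)
next
  case (lspan_step f g c)
  from lspan_step(2) obtain p q where g: "g = cat p q" "p \<in> tensp (hom i) (Rbar R)" "q \<in> hom j" by blast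
  have "g \<in> lspan (Cm m)" using inner_span[OF g(2,3) lspan_step.prems] g(1) by simp
  then show ?case using lspan_add[OF lspan_smul lspan_step.IH[OF lspan_step.prems]] by blast
qed

lemma Gm_span: "f \<in> lspan (Gm m) \<Longrightarrow> N \<le> m \<Longrightarrow> f \<in> lspan (Cm m)"
proof (induction rule: lspan.induct)
  case lspan_zero show ?case by (rule lspan.lspan_zero)
next
  case (lspan_step f g c)
  from lspan_step(2) obtain i where i: "i \<in> {0..m-N}" "g \<in> tensp (tensp (hom i) (Rbar R)) (hom (m - N - i))" by blast
  have "g \<in> lspan (Cm m)" by (rule outer_span[OF i(2)]) (use i lspan_step.prems in auto)
  then show ?case using lspan_add[OF lspan_smul lspan_step.IH[OF lspan_step.prems]] by blast
qed

lemma kernel: "{f \<in> hom m. phi R f = (\<lambda>_. 0)} = Icomp N R m"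
proof (cases "m < N")
  case True
  have nfm: "\<And>w. length w = m \<Longrightarrow> nf_word R w" using True lm_len by (force simp: nf_word_def)
  have z: "NL (\<lambda>_. 0) = (\<lambda>_. 0)" by (simp add: NL_def lin_ext_def)
  have "{f \<in> hom m. phi R f = (\<lambda>_. 0)} = {\<lambda>_. 0}"
  proof (intro equalityI subsetI)
    fix f assume "f \<in> {f \<in> hom m. phi R f = (\<lambda>_. 0)}"
    then have f: "f \<in> hom m" "phi R f = (\<lambda>_. 0)" by auto
    have fT: "f \<in> TV" using f hom_TV by blast
    have "nf R f" using f(1) nfm by (auto simp: nf_def hom_def)
    then have "NL f = f" using NL_nf fT by blast
    then show "f \<in> {\<lambda>_. 0}" using f phi_eq fT by simp
  next
    fix f assume "f \<in> {(\<lambda>_. 0) :: ('x,'k) tv}"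
    moreover have "phi R (\<lambda>_. 0) = NL (\<lambda>_. 0)" by (rule phi_eq) (simp add: TV_def supp_def)
    ultimately show "f \<in> {f \<in> hom m. phi R f = (\<lambda>_. 0)}" using phi_eq z by (simp add: hom_def supp_def)
  qed
  then show ?thesis using True by (simp add: Icomp_def)
next
  case False
  have "{f \<in> hom m. phi R f = (\<lambda>_. 0)} = lspan (Gm m)"
  proof (intro equalityI subsetI)
    fix f assume "f \<in> {f \<in> hom m. phi R f = (\<lambda>_. 0)}"
    then have f: "f \<in> hom m" "phi R f = (\<lambda>_. 0)" by auto
    have fT: "f \<in> TV" using f hom_TV by blast
    show "f \<in> lspan (Gm m)" using f_I[OF f(1)] f(2) phi_eq[OF fT] by simp
  next
    fix f assume "f \<in> lspan (Gm m)"
    then have "f \<in> lspan (Cm m)" by (rule Gm_span) (use False in simp)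
    then have "f \<in> hom m \<and> NL f = (\<lambda>_. 0)" by (rule Cm_K)
    moreover then have "f \<in> TV" using hom_TV by blast
    ultimately show "f \<in> {f \<in> hom m. phi R f = (\<lambda>_. 0)}" using phi_eq by simp
  qed
  then show ?thesis using False by (simp add: Icomp_def)
qed

end


context pres_sc begin

lemma NW_len: "NW w u \<noteq> 0 \<Longrightarrow> length u = length w"
  using NW_props[of w] by (auto simp: supp_def rel_def)

lemma NL_hpart: "f \<in> TV \<Longrightarrow> NL (hpart m f) = hpart m (NL f)"
proof (rule ext)
  fix u assume f: "f \<in> TV"
  have fd: "finite (supp f)" using f TV_finite by blast
  have s: "supp (hpart m f) \<subseteq> supp f" by (auto simp: hpart_def supp_def)
  have "NL (hpart m f) u = (\<Sum>w\<in>supp f. hpart m f w * NW w u)"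
    unfolding NL_def by (subst lin_ext_expand[OF fd s]) (simp add: lc_def)
  also have "\<dots> = (if length u = m then (\<Sum>w\<in>supp f. f w * NW w u) else 0)"
  proof -
    have "\<And>w. hpart m f w * NW w u = (if length u = m then f w * NW w u else 0)"
    proof -
      fix w
      show "hpart m f w * NW w u = (if length u = m then f w * NW w u else 0)"
      proof (cases "NW w u = 0")
        case True then show ?thesis by simp
      next
        case False then have "length u = length w" by (rule NW_len)
        then show ?thesis by (simp add: hpart_def)
      qed
    qed
    then show ?thesis by (simp add: sum.If_cases)
  qed
  also have "\<dots> = hpart m (NL f) u"
    unfolding NL_def hpart_def by (subst lin_ext_expand[OF fd]) (auto simp: lc_def)
  finally show "NL (hpart m f) u = hpart m (NL f) u" .
qed

lemma hpart_hom: "f \<in> TV \<Longrightarrow> hpart m f \<in> hom m"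
proof -
  assume "f \<in> TV"
  moreover have "supp (hpart m f) \<subseteq> supp f" by (auto simp: hpart_def supp_def)
  ultimately have "finite (supp (hpart m f))" unfolding TV_def by (auto intro: finite_subset)
  then show ?thesis unfolding hom_def by (simp add: hpart_def)
qed

lemma Ideal_iff: "f \<in> TV \<Longrightarrow> f \<in> Ideal N R \<longleftrightarrow> NL f = (\<lambda>_. 0)"
proof -
  assume f: "f \<in> TV"
  have "f \<in> Ideal N R \<longleftrightarrow> (\<forall>m. NL (hpart m f) = (\<lambda>_. 0))"
  proof -
    have "\<And>m. hpart m f \<in> Icomp N R m \<longleftrightarrow> NL (hpart m f) = (\<lambda>_. 0)"
    proof -
      fix m
      have h: "hpart m f \<in> hom m" by (rule hpart_hom[OF f])
      then have "hpart m f \<in> TV" using hom_TV by blast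
      then have "phi R (hpart m f) = NL (hpart m f)" by (rule phi_eq)
      moreover have "hpart m f \<in> Icomp N R m \<longleftrightarrow> hpart m f \<in> {f \<in> hom m. phi R f = (\<lambda>_. 0)}"
        by (simp only: kernel)
      ultimately show "hpart m f \<in> Icomp N R m \<longleftrightarrow> NL (hpart m f) = (\<lambda>_. 0)"
        using h by simp
    qed
    then show ?thesis using f unfolding Ideal_def by blast
  qed
  also have "\<dots> \<longleftrightarrow> NL f = (\<lambda>_. 0)"
    unfolding NL_hpart[OF f]
  proof
    assume a: "\<forall>m. hpart m (NL f) = (\<lambda>_. 0)"
    show "NL f = (\<lambda>_. 0)"
    proof
      fix x
      have "hpart (length x) (NL f) x = 0" using a by simp
      then show "NL f x = 0" by (simp add: hpart_def)
    qed
  qed (simp add: hpart_def)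
  finally show ?thesis .
qed

lemma diffTV: "(f::('x,'k) tv) \<in> TV \<Longrightarrow> g \<in> TV \<Longrightarrow> (\<lambda>x. g x - f x) \<in> TV"
  by (rule diff_TV)

lemma cls_eq: "f \<in> TV \<Longrightarrow> cls N R f = {g \<in> TV. NL g = NL f}"
proof -
  assume f: "f \<in> TV"
  have "\<And>g. g \<in> TV \<Longrightarrow> (\<lambda>x. g x - f x) \<in> Ideal N R \<longleftrightarrow> NL g = NL f"
  proof -
    fix g :: "('x,'k) tv" assume g: "g \<in> TV"
    have "(\<lambda>x. g x - f x) \<in> Ideal N R \<longleftrightarrow> NL (\<lambda>x. g x - f x) = (\<lambda>_. 0)"
      by (rule Ideal_iff[OF diffTV[OF f g]])
    also have "\<dots> \<longleftrightarrow> NL g = NL f" unfolding NL_diff[OF g f] by (simp add: fun_eq_iff)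
    finally show "(\<lambda>x. g x - f x) \<in> Ideal N R \<longleftrightarrow> NL g = NL f" .
  qed
  then show ?thesis unfolding cls_def by blast
qed

lemma rep_cls: "f \<in> TV \<Longrightarrow> rep (cls N R f) \<in> TV \<and> NL (rep (cls N R f)) = NL f"
proof -
  assume f: "f \<in> TV"
  have "f \<in> cls N R f" using cls_eq[OF f] f by simp
  then have "rep (cls N R f) \<in> cls N R f" unfolding rep_def using someI[of "\<lambda>x. x \<in> cls N R f" f] by simp
  then show ?thesis using cls_eq[OF f] by simp
qed

lemma phibar_cls: "f \<in> TV \<Longrightarrow> phibar R (cls N R f) = NL f"
proof -
  assume f: "f \<in> TV"
  from rep_cls[OF f] have "rep (cls N R f) \<in> TV" "NL (rep (cls N R f)) = NL f" by auto
  then show ?thesis unfolding phibar_def using phi_eq by simp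
qed

lemma zero_TV: "(\<lambda>_. 0) \<in> (TV :: ('x,'k) tv set)" by (simp add: TV_def supp_def)
lemma NL_zero: "NL (\<lambda>_. 0) = (\<lambda>_. 0)" by (simp add: NL_def lin_ext_def)

lemma AJ_cls: "F \<in> AJ N R n \<Longrightarrow> \<forall>v. \<exists>g\<in>TV. F v = cls N R g"
  unfolding AJ_def
proof (induction rule: atspan.induct)
  case atspan_zero then show ?case using zero_TV by (auto simp: Azero_def)
next
  case (atspan_step F G c)
  from atspan_step(2) obtain a j where G: "G = etens N R a j" "a \<in> Aset N R" by blast
  then obtain t where t: "t \<in> TV" "a = cls N R t" by (auto simp: Aset_def)
  show ?case
  proof
    fix v
    obtain g where g: "g \<in> TV" "F v = cls N R g" using atspan_step.IH by blast
    have "G v = cls N R (\<lambda>x. j v * rep a x)" using G by (simp add: etens_def)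
    have r1: "rep (F v) \<in> TV" using rep_cls g by simp
    have "rep a \<in> TV" using rep_cls t by simp
    moreover have "supp (\<lambda>x. j v * rep a x) \<subseteq> supp (rep a)" by (auto simp: supp_def)
    ultimately have "(\<lambda>x. j v * rep a x) \<in> TV" unfolding TV_def by (auto intro: finite_subset)
    then have r2: "rep (G v) \<in> TV" using rep_cls G by (simp add: etens_def)
    have "supp (\<lambda>x. c * rep (G v) x + rep (F v) x) \<subseteq> supp (rep (G v)) \<union> supp (rep (F v))"
      by (auto simp: supp_def)
    then have "(\<lambda>x. c * rep (G v) x + rep (F v) x) \<in> TV"
      using r1 r2 unfolding TV_def by (auto intro: finite_subset)
    then show "\<exists>g\<in>TV. cls N R (\<lambda>x. c * rep (G v) x + rep (F v) x) = cls N R g" by blast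
  qed
qed

end


context pres_sc begin

lemma rmul_lin: "rmul (\<lambda>x. a * f x + b * g x) v = (\<lambda>x. a * rmul f v x + b * rmul g v x)"
  by (rule ext) (simp add: rmul_def)

lemma NL_rmul_NW: "NL (rmul (NW y) v) = NW (y @ v)"
proof (induction y rule: wf_induct_rule[OF wf_rel])
  case (1 y)
  show ?case
  proof (cases "nf_word R y")
    case True
    have "\<not> (\<exists>u v g. g \<in> R \<and> y = u @ lm g @ v)" using True by (simp add: nf_word_def)
    then show ?thesis using True by (simp add: NW_nf rmul_wd NL_wd)
  next
    case False
    obtain u g v0 where c: "cd y = (u,g,v0)" by (cases "cd y") auto
    from cd[OF False c] have g: "g \<in> R" "y = u @ lm g @ v0" by auto
    define d where "d = (\<lambda>x. wd y x - ctx u g v0 x)"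
    have dT: "d \<in> TV" unfolding d_def by (rule dec_TV[OF g(1)])
    have sd: "\<And>z. z \<in> supp d \<Longrightarrow> (z, y) \<in> rel" unfolding d_def using supp_dec[OF g(1)] g(2) by auto
    have fd: "finite (supp d)" using dT TV_finite by blast
    have e: "NW y = lc (supp d) d NW" using NW_red[OF False c] lin_ext_expand[OF fd order_refl, of NW] by (simp add: d_def)
    have "NL (rmul (NW y) v) = lc (supp d) d (\<lambda>x. NL (rmul (NW x) v))"
      unfolding e rmul_lc using fd NW_props by (subst NL_lc) (auto intro: rmul_TV)
    also have "\<dots> = lc (supp d) d (\<lambda>x. NL (rmul (wd x) v))"
      unfolding lc_def using 1 sd by (intro ext sum.cong refl) (simp add: rmul_wd NL_wd)
    also have "\<dots> = NL (rmul d v)"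
      apply (subst (3) expand[OF dT]) unfolding rmul_lc using fd by (subst NL_lc) (auto simp: rmul_wd)
    also have "\<dots> = NW (y @ v)"
    proof -
      have "rmul d v = (\<lambda>x. wd (y @ v) x - ctx u g (v0 @ v) x)"
        unfolding d_def rmul_diff rmul_wd using R_TV[OF g(1)] by (simp add: rmul_rmul lmul_TV)
      then show ?thesis using R_TV[OF g(1)] NL_ctx0[OF g(1)] by (simp add: NL_diff ctx_TV NL_wd)
    qed
    finally show ?thesis .
  qed
qed

lemma NL_rmul_NL: "g \<in> TV \<Longrightarrow> NL (rmul (NL g) v) = NL (rmul g v)"
proof -
  assume gT: "g \<in> TV"
  have fg: "finite (supp g)" using gT TV_finite by blast
  have e: "NL g = lc (supp g) g NW" unfolding NL_def by (rule lin_ext_expand[OF fg]) simp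
  have "NL (rmul (NL g) v) = lc (supp g) g (\<lambda>x. NL (rmul (NW x) v))"
    unfolding e rmul_lc using fg NW_props by (subst NL_lc) (auto intro: rmul_TV)
  also have "\<dots> = lc (supp g) g (\<lambda>x. NL (rmul (wd x) v))" by (simp add: NL_rmul_NW rmul_wd NL_wd)
  also have "\<dots> = NL (rmul g v)"
    apply (subst (3) expand[OF gT]) unfolding rmul_lc using fg by (subst NL_lc) (auto simp: rmul_wd)
  finally show ?thesis .
qed

definition Gt :: "nat \<Rightarrow> 'x list \<Rightarrow> ('x,'k) tv" where
  "Gt l' = (\<lambda>w. cat (phi R (wd (take (length w - l') w))) (wd (drop (length w - l') w)))"

lemma tensid_eq: "tensid (phi R) l' = lin_ext (Gt l')" unfolding tensid_def Gt_def ..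

lemma phi_wd: "phi R (wd x) = NW x" using phi_eq[of "wd x"] by (simp add: NL_wd)

lemma Gt_app: "l' \<le> length v \<Longrightarrow> Gt l' (y @ v) = rmul (NW (y @ take (length v - l') v)) (drop (length v - l') v)"
proof -
  assume l: "l' \<le> length v"
  have "length (y @ v) - l' = length y + (length v - l')" using l by simp
  then show ?thesis unfolding Gt_def by (simp add: phi_wd cat_wd_right)
qed

lemma Gt_rmul: "h \<in> TV \<Longrightarrow> l' \<le> length v \<Longrightarrow>
   lin_ext (Gt l') (rmul h v) = rmul (NL (rmul h (take (length v - l') v))) (drop (length v - l') v)"
proof -
  assume h: "h \<in> TV" and l: "l' \<le> length v"
  have fh: "finite (supp h)" using h TV_finite by blast
  let ?v1 = "take (length v - l') v" and ?v2 = "drop (length v - l') v"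
  have "lin_ext (Gt l') (rmul h v) = lc (supp h) h (\<lambda>y. Gt l' (y @ v))"
    apply (subst expand[OF h]) unfolding rmul_lc using fh by (subst lin_ext_lc) (auto simp: rmul_wd lin_ext_wd)
  also have "\<dots> = lc (supp h) h (\<lambda>y. rmul (NW (y @ ?v1)) ?v2)" using Gt_app[OF l] by simp
  also have "\<dots> = rmul (NL (rmul h ?v1)) ?v2"
  proof -
    have "NL (rmul h ?v1) = lc (supp h) h (\<lambda>y. NW (y @ ?v1))"
      apply (subst expand[OF h]) unfolding rmul_lc using fh by (subst NL_lc) (auto simp: rmul_wd NL_wd)
    then show ?thesis by (simp add: rmul_lc)
  qed
  finally show ?thesis .
qed

end


lemma words_finite: "finite (words l :: 'x::finite list set)"
  unfolding words_def by (rule finite_words_len)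

lemma words_split:
  "(\<Sum>v\<in>(words (k + l') :: 'x::finite list set). T v) = (\<Sum>w2\<in>words l'. \<Sum>w1\<in>words k. T (w1 @ w2))"
proof -
  have bij: "bij_betw (\<lambda>(w1,w2). w1 @ w2) (words k \<times> words l') (words (k + l') :: 'x list set)"
  proof (rule bij_betw_imageI)
    show "inj_on (\<lambda>(w1,w2). w1 @ w2) (words k \<times> (words l' :: 'x list set))"
      by (rule inj_onI, clarify) (simp add: words_def)
    show "(\<lambda>(w1,w2). w1 @ w2) ` (words k \<times> words l') = (words (k + l') :: 'x list set)"
    proof (intro equalityI subsetI)
      fix v assume "v \<in> (words (k + l') :: 'x list set)"
      then have "v = take k v @ drop k v" "take k v \<in> words k" "drop k v \<in> words l'"
        by (auto simp: words_def)
      then show "v \<in> (\<lambda>(w1,w2). w1 @ w2) ` (words k \<times> words l')"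
        by (intro image_eqI[of _ _ "(take k v, drop k v)"]) auto
    next
      fix v assume "v \<in> (\<lambda>(w1,w2). w1 @ w2) ` (words k \<times> (words l' :: 'x list set))"
      then show "v \<in> words (k + l')" by (auto simp: words_def)
    qed
  qed
  have "(\<Sum>v\<in>words (k + l'). T v) = (\<Sum>p\<in>words k \<times> words l'. (\<lambda>(w1,w2). T (w1 @ w2)) p)"
    using sum.reindex_bij_betw[OF bij, of T] by (simp add: case_prod_unfold)
  also have "\<dots> = (\<Sum>w1\<in>words k. \<Sum>w2\<in>words l'. T (w1 @ w2))"
    by (rule sum.cartesian_product[symmetric])
  also have "\<dots> = (\<Sum>w2\<in>words l'. \<Sum>w1\<in>words k. T (w1 @ w2))" by (rule sum.swap)
  finally show ?thesis .
qed


lemma lN_mono: "1 \<le> n \<Longrightarrow> N \<ge> 1 \<Longrightarrow> lN N (n - 1) \<le> lN N n"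
proof -
  assume n: "1 \<le> n" and N: "N \<ge> 1"
  show ?thesis
  proof (cases "even n")
    case True
    then obtain q where q: "n = 2 * q" by (rule evenE)
    then obtain p where p: "q = Suc p" using n by (cases q) auto
    have "n - 1 = 2 * p + 1" using q p by simp
    then have "lN N (n - 1) = p * N + 1" by (simp add: lN_def)
    moreover have "lN N n = (Suc p) * N" using q p by (simp add: lN_def)
    ultimately show ?thesis using N by simp
  next
    case False
    then obtain q where q: "n = 2 * q + 1" by (rule oddE)
    then have "lN N n = q * N + 1" "lN N (n - 1) = q * N" by (simp_all add: lN_def)
    then show ?thesis by simp
  qed
qed

context pres_sc begin

lemma AJ_rep: "F \<in> AJ N R n \<Longrightarrow> rep (F v) \<in> TV \<and> phibar R (F v) = NL (rep (F v))"
proof -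
  assume F: "F \<in> AJ N R n"
  obtain g where g: "g \<in> TV" "F v = cls N R g" using AJ_cls[OF F] by blast
  have "rep (F v) \<in> TV" using rep_cls[OF g(1)] g(2) by simp
  then show ?thesis unfolding phibar_def using phi_eq by simp
qed

lemma phin_eq: "F \<in> AJ N R n \<Longrightarrow> phin R l F = lc (words l) (\<lambda>_. 1) (\<lambda>v. rmul (NL (rep (F v))) v)"
  unfolding phin_def lc_def cat_wd_right using AJ_rep by simp

lemma main2:
  assumes F: "F \<in> AJ N R n" and n: "1 \<le> n"
  shows "phin R (lN N (n - 1)) (dK N R n F) = tensid (phi R) (lN N (n - 1)) (phin R (lN N n) F)"
proof -
  define l where "l = lN N n"
  define l' where "l' = lN N (n - 1)"
  define k where "k = l - l'"
  have ll: "l' \<le> l" unfolding l_def l'_def using lN_mono[OF n] N2 by simp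
  have lk: "l = k + l'" using ll by (simp add: k_def)
  define Q where "Q = (\<lambda>v. rep (F v))"
  have QT: "\<And>v. Q v \<in> TV" using AJ_rep[OF F] by (simp add: Q_def)
  define T where "T = (\<lambda>v. rmul (NL (rmul (Q v) (take k v))) (drop k v))"
  have RHS: "tensid (phi R) l' (phin R l F) = lc (words l) (\<lambda>_. 1) T"
  proof -
    have "tensid (phi R) l' (phin R l F) = lc (words l) (\<lambda>_. 1) (\<lambda>v. lin_ext (Gt l') (rmul (NL (Q v)) v))"
      unfolding tensid_eq phin_eq[OF F] Q_def
    proof (rule lin_ext_lc[OF words_finite])
      fix v :: "'x list"
      have "rep (F v) \<in> TV" using QT by (simp add: Q_def)
      then have "NL (rep (F v)) \<in> TV" using NL_props by blast
      then show "rmul (NL (rep (F v))) v \<in> TV" by (rule rmul_TV)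
    qed
    also have "\<dots> = lc (words l) (\<lambda>_. 1) T"
    proof -
      have "\<And>v. v \<in> words l \<Longrightarrow> lin_ext (Gt l') (rmul (NL (Q v)) v) = T v"
      proof -
        fix v :: "'x list" assume v: "v \<in> words l"
        then have lv: "length v = l" by (simp add: words_def)
        have NQ: "NL (Q v) \<in> TV" using NL_props[OF QT] by blast
        have "length v - l' = k" using lv by (simp add: k_def)
        then have "lin_ext (Gt l') (rmul (NL (Q v)) v) = rmul (NL (rmul (NL (Q v)) (take k v))) (drop k v)"
          using Gt_rmul[OF NQ, of l' v] ll lv by simp
        also have "\<dots> = T v" unfolding T_def using NL_rmul_NL[OF QT] by simp
        finally show "lin_ext (Gt l') (rmul (NL (Q v)) v) = T v" .
      qed
      then show ?thesis unfolding lc_def by (intro ext sum.cong refl) simp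
    qed
    finally show ?thesis .
  qed
  have LHS: "phin R l' (dK N R n F) = (\<lambda>x. \<Sum>w2\<in>words l'. \<Sum>w1\<in>words k. T (w1 @ w2) x)"
  proof -
    have "\<And>w2. w2 \<in> words l' \<Longrightarrow> phibar R (dK N R n F w2) = lc (words k) (\<lambda>_. 1) (\<lambda>w1. NL (rmul (Q (w1 @ w2)) w1))"
    proof -
      fix w2 :: "'x list" assume w2: "w2 \<in> words l'"
      define D where "D = lc (words k) (\<lambda>_. 1) (\<lambda>w1. rmul (Q (w1 @ w2)) w1)"
      have DT: "D \<in> TV" unfolding D_def by (rule lc_TV[OF words_finite]) (use QT in \<open>auto intro: rmul_TV\<close>)
      have "dK N R n F w2 = cls N R D"
        using w2 unfolding dK_def D_def l'_def[symmetric] l_def[symmetric] k_def[symmetric] Q_def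
        by (simp add: words_def lc_def cat_wd_right)
      then have "phibar R (dK N R n F w2) = NL D" using phibar_cls[OF DT] by simp
      also have "\<dots> = lc (words k) (\<lambda>_. 1) (\<lambda>w1. NL (rmul (Q (w1 @ w2)) w1))"
        unfolding D_def by (rule NL_lc[OF words_finite]) (use QT in \<open>auto intro: rmul_TV\<close>)
      finally show "phibar R (dK N R n F w2) = lc (words k) (\<lambda>_. 1) (\<lambda>w1. NL (rmul (Q (w1 @ w2)) w1))" .
    qed
    then have "phin R l' (dK N R n F) = (\<lambda>x. \<Sum>w2\<in>words l'. rmul (lc (words k) (\<lambda>_. 1) (\<lambda>w1. NL (rmul (Q (w1 @ w2)) w1))) w2 x)"
      unfolding phin_def cat_wd_right by (intro ext sum.cong refl) simp
    also have "\<dots> = (\<lambda>x. \<Sum>w2\<in>words l'. \<Sum>w1\<in>words k. T (w1 @ w2) x)"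
      unfolding rmul_lc T_def by (intro ext sum.cong refl) (simp add: lc_def words_def)
    finally show ?thesis .
  qed
  have "lc (words l) (\<lambda>_. 1) T = (\<lambda>x. \<Sum>w2\<in>words l'. \<Sum>w1\<in>words k. T (w1 @ w2) x)"
    unfolding lc_def lk by (rule ext) (simp add: words_split)
  then show ?thesis using LHS RHS by (simp add: l_def l'_def)
qed

end


context pres_sc begin

lemma hom_lspan: "f \<in> lspan S \<Longrightarrow> S \<subseteq> hom m \<Longrightarrow> f \<in> hom m"
proof (induction rule: lspan.induct)
  case lspan_zero then show ?case by (simp add: hom_def supp_def)
next
  case (lspan_step f g c)
  have f: "f \<in> hom m" using lspan_step by blast
  have g: "g \<in> hom m" using lspan_step by blast
  have "supp (\<lambda>x. c * g x + f x) \<subseteq> supp g \<union> supp f" by (auto simp: supp_def)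
  moreover have "finite (supp g \<union> supp f)" using f g by (simp add: hom_def)
  ultimately have "finite (supp (\<lambda>x. c * g x + f x))" by (rule finite_subset)
  moreover have "\<And>w. c * g w + f w \<noteq> 0 \<Longrightarrow> length w = m"
  proof -
    fix w assume "c * g w + f w \<noteq> 0"
    then have "g w \<noteq> 0 \<or> f w \<noteq> 0" by auto
    then show "length w = m" using f g by (auto simp: hom_def)
  qed
  ultimately show ?case by (simp add: hom_def)
qed

lemma lN_ge: "2 \<le> n \<Longrightarrow> N \<le> lN N n"
proof -
  assume "2 \<le> n"
  then have "1 \<le> n div 2" by simp
  then have "1 * N \<le> (n div 2) * N" by (rule mult_le_mono1)
  then have "N \<le> (n div 2) * N" by simp
  then show ?thesis unfolding lN_def by linarith
qed

lemma J_hom: "1 \<le> n \<Longrightarrow> J N R n \<subseteq> hom (lN N n)"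
proof -
  assume n: "1 \<le> n"
  consider "n = 1" | "n = 2" | "n \<ge> 3" using n by linarith
  then show ?thesis
  proof cases
    case 1 then show ?thesis by (simp add: J_def lN_def)
  next
    case 2
    have "lN N n = N" using 2 by (simp add: lN_def)
    moreover have "Rbar R \<subseteq> hom N"
    proof
      fix f assume "f \<in> Rbar R"
      then have "f \<in> lspan R" by (simp add: Rbar_def)
      moreover have "R \<subseteq> hom N" using R_hom by blast
      ultimately show "f \<in> hom N" by (rule hom_lspan)
    qed
    ultimately show ?thesis using 2 by (simp add: J_def)
  next
    case 3
    let ?l = "lN N n"
    have Nl: "N \<le> ?l" by (rule lN_ge) (use 3 in simp)
    show ?thesis
    proof
      fix f assume fJ: "f \<in> J N R n"
      have Jeq: "J N R n = (\<Inter>i\<in>{0..?l - N}. tensp (tensp (hom i) (Rbar R)) (hom (?l - N - i)))"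
      proof -
        have ne: "n \<noteq> 0" "n \<noteq> 1" "n \<noteq> 2" using 3 by auto
        show ?thesis unfolding J_def by (simp only: ne if_False)
      qed
      have fI: "f \<in> (\<Inter>i\<in>{0..?l - N}. tensp (tensp (hom i) (Rbar R)) (hom (?l - N - i)))"
        using fJ unfolding Jeq .
      have z: "(0::nat) \<in> {0..?l - N}" by simp
      have "f \<in> tensp (tensp (hom 0) (Rbar R)) (hom (?l - N - 0))" using INT_D[OF fI z] .
      then have "f \<in> Gm ?l" by (rule UN_I[OF z])
      then have "f \<in> lspan (Gm ?l)" by (rule lspan_gen)
      then have "f \<in> lspan (Cm ?l)" using Nl by (rule Gm_span)
      then show "f \<in> hom ?l" using Cm_K by blast
    qed
  qed
qed

lemma cat_hom_right: "(q :: ('x,'k) tv) \<in> hom l \<Longrightarrow> cat p q = lc (words l) q (\<lambda>v. rmul p v)"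
proof -
  assume q: "q \<in> hom l"
  then have qT: "q \<in> TV" using hom_TV by blast
  have "cat p q = lc (supp q) q (\<lambda>v. rmul p v)"
    apply (subst expand[OF qT]) by (simp add: cat_lc_right cat_wd_right)
  also have "\<dots> = lc (words l) q (\<lambda>v. rmul p v)"
    unfolding lc_def
    by (rule ext, rule sum.mono_neutral_left) (use q finite_words_len in \<open>auto simp: hom_def supp_def words_def\<close>)
  finally show ?thesis .
qed

lemma exists_pre:
  assumes f: "f \<in> tensp (phi R ` TV) (J N R n)" and n: "1 \<le> n"
  shows "\<exists>F\<in>AJ N R n. phin R (lN N n) F = f"
  using f unfolding tensp_def
proof (induction rule: lspan.induct)
  case lspan_zero
  let ?F = "\<lambda>_::'x list. Azero N R"
  have FA: "?F \<in> AJ N R n" unfolding AJ_def by (rule atspan.atspan_zero)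
  have "NL (rep (Azero N R)) = (\<lambda>_. 0)"
    using rep_cls[OF zero_TV] NL_zero by (simp add: Azero_def)
  then have "phin R (lN N n) ?F = (\<lambda>_. 0)"
    unfolding phin_eq[OF FA] by (simp add: lc_def rmul_def)
  then show ?case using FA by blast
next
  case (lspan_step f g c)
  let ?l = "lN N n"
  obtain F where F: "F \<in> AJ N R n" "phin R ?l F = f" using lspan_step.IH by blast
  obtain p q where g: "g = cat p q" "p \<in> phi R ` TV" "q \<in> J N R n" using lspan_step(2) by blast
  obtain t where t: "t \<in> TV" "p = phi R t" using g(2) by blast
  have pt: "p = NL t" using t phi_eq by simp
  have qh: "q \<in> hom ?l" using J_hom[OF n] g(3) by blast
  define a where "a = cls N R t"
  have aA: "a \<in> Aset N R" using t by (simp add: a_def Aset_def)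
  define G where "G = etens N R a q"
  have GS: "G \<in> {etens N R a j | a j. a \<in> Aset N R \<and> j \<in> J N R n}" using aA g(3) by (auto simp: G_def)
  define F' where "F' = (\<lambda>v. cls N R (\<lambda>x. c * rep (G v) x + rep (F v) x))"
  have F'A: "F' \<in> AJ N R n" unfolding F'_def using F(1) GS unfolding AJ_def by (rule atspan.atspan_step)
  have ra: "rep a \<in> TV" "NL (rep a) = NL t" using rep_cls[OF t(1)] by (simp_all add: a_def)
  have qa: "\<And>v. (\<lambda>x. q v * rep a x) \<in> TV"
  proof -
    fix v
    have "supp (\<lambda>x. q v * rep a x) \<subseteq> supp (rep a)" by (auto simp: supp_def)
    then show "(\<lambda>x. q v * rep a x) \<in> TV" using ra(1) unfolding TV_def by (auto intro: finite_subset)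
  qed
  have rG: "\<And>v. rep (G v) \<in> TV \<and> NL (rep (G v)) = (\<lambda>x. q v * p x)"
  proof -
    fix v
    have "G v = cls N R (\<lambda>x. q v * rep a x)" by (simp add: G_def etens_def)
    then have "rep (G v) \<in> TV \<and> NL (rep (G v)) = NL (\<lambda>x. q v * rep a x)" using rep_cls[OF qa] by simp
    moreover have "NL (\<lambda>x. q v * rep a x) = (\<lambda>x. q v * p x)"
      using NL_lin[OF ra(1) ra(1), of "q v" 0] ra(2) pt by simp
    ultimately show "rep (G v) \<in> TV \<and> NL (rep (G v)) = (\<lambda>x. q v * p x)" by simp
  qed
  have rF: "\<And>v. rep (F v) \<in> TV" using AJ_rep[OF F(1)] by blast
  have nF': "\<And>v. NL (rep (F' v)) = (\<lambda>x. c * (q v * p x) + NL (rep (F v)) x)"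
  proof -
    fix v
    have T: "(\<lambda>x. c * rep (G v) x + rep (F v) x) \<in> TV"
    proof -
      have "supp (\<lambda>x. c * rep (G v) x + rep (F v) x) \<subseteq> supp (rep (G v)) \<union> supp (rep (F v))"
        by (auto simp: supp_def)
      then show ?thesis using rG rF unfolding TV_def by (auto intro: finite_subset)
    qed
    have "NL (rep (F' v)) = NL (\<lambda>x. c * rep (G v) x + rep (F v) x)"
      using rep_cls[OF T] by (simp add: F'_def)
    also have "\<dots> = (\<lambda>x. c * NL (rep (G v)) x + 1 * NL (rep (F v)) x)"
      using NL_lin[of "rep (G v)" "rep (F v)" c 1] rG rF by simp
    finally show "NL (rep (F' v)) = (\<lambda>x. c * (q v * p x) + NL (rep (F v)) x)" using rG by simp
  qed
  have "phin R ?l F' = (\<lambda>x. c * g x + f x)"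
  proof -
    have "phin R ?l F' = lc (words ?l) (\<lambda>_. 1) (\<lambda>v. rmul (NL (rep (F' v))) v)" by (rule phin_eq[OF F'A])
    also have "\<dots> = (\<lambda>x. c * lc (words ?l) q (\<lambda>v. rmul p v) x + lc (words ?l) (\<lambda>_. 1) (\<lambda>v. rmul (NL (rep (F v))) v) x)"
      unfolding nF' lc_def
    proof (rule ext)
      fix x
      have "(\<Sum>v\<in>words ?l. 1 * rmul (\<lambda>x. c * (q v * p x) + NL (rep (F v)) x) v x)
          = (\<Sum>v\<in>words ?l. c * (q v * rmul p v x) + 1 * rmul (NL (rep (F v))) v x)"
        by (rule sum.cong) (auto simp: rmul_def)
      also have "\<dots> = c * (\<Sum>v\<in>words ?l. q v * rmul p v x) + (\<Sum>v\<in>words ?l. 1 * rmul (NL (rep (F v))) v x)"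
        by (simp add: sum.distrib sum_distrib_left)
      finally show "(\<Sum>v\<in>words ?l. 1 * rmul (\<lambda>x. c * (q v * p x) + NL (rep (F v)) x) v x)
          = c * (\<Sum>v\<in>words ?l. q v * rmul p v x) + (\<Sum>v\<in>words ?l. 1 * rmul (NL (rep (F v))) v x)" .
    qed
    also have "\<dots> = (\<lambda>x. c * g x + f x)"
      using cat_hom_right[OF qh, of p] g(1) phin_eq[OF F(1)] F(2) by simp
    finally show ?thesis .
  qed
  then show ?case using F'A by blast
qed

end

theorem final:
  fixes R :: "('x::{finite,linorder}, 'k::field) tv set" and N :: nat
  assumes "N \<ge> 2"
    and "presentation N R"
    and "side_confluent N R"
  shows "(\<forall>m. reduction_operator m (phi R) \<and> {f \<in> hom m. phi R f = (\<lambda>_. 0)} = Icomp N R m)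
       \<and> (\<forall>n\<ge>1. \<forall>f\<in>tensp (phi R ` TV) (J N R n).
            dprime N R n f = tensid (phi R) (lN N (n - 1)) f)"
proof -
  interpret pres_sc N R
    using assms by (unfold_locales) auto
  have 1: "\<forall>m. reduction_operator m (phi R) \<and> {f \<in> hom m. phi R f = (\<lambda>_. 0)} = Icomp N R m"
    using red_op kernel by blast
  have 2: "\<forall>n\<ge>1. \<forall>f\<in>tensp (phi R ` TV) (J N R n). dprime N R n f = tensid (phi R) (lN N (n - 1)) f"
  proof (intro allI impI ballI)
    fix n f assume n: "1 \<le> n" and f: "f \<in> tensp (phi R ` TV) (J N R n)"
    have "f \<in> phin R (lN N n) ` AJ N R n" using exists_pre[OF f n] by blast
    then have F0: "inv_into (AJ N R n) (phin R (lN N n)) f \<in> AJ N R n"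
      "phin R (lN N n) (inv_into (AJ N R n) (phin R (lN N n)) f) = f"
      by (rule inv_into_into, rule f_inv_into_f)
    show "dprime N R n f = tensid (phi R) (lN N (n - 1)) f"
      unfolding dprime_def using main2[OF F0(1) n] F0(2) by simp
  qed
  show ?thesis using 1 2 by blast
qed


theorem lemma3p3p3:
  fixes R :: "('x::{finite,linorder}, 'k::field) tv set" and N :: nat
  assumes "N \<ge> 2"
    and "presentation N R"
    and "side_confluent N R"
  shows "(\<forall>m. reduction_operator m (phi R) \<and> {f \<in> hom m. phi R f = (\<lambda>_. 0)} = Icomp N R m)
       \<and> (\<forall>n\<ge>1. \<forall>f\<in>tensp (phi R ` TV) (J N R n).
            dprime N R n f = tensid (phi R) (lN N (n - 1)) f)"
  using final[OF assms] .

end
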